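(* The restriction of $\Theta$ to $\mathbf H_{ho}$ is an isomorphism of graded Hopf algebras $\mathbf H_{ho}\to\mathbf{FQSym}$.
   Context: A rooted forest is a finite graph each of whose components is a tree with a distinguished root; edges are oriented towards the roots, and for distinct vertices $v,w$ we write $v\twoheadrightarrow w$ if there is an oriented path from $v$ to $w$. An ordered forest with $n$ vertices is a rooted forest with a total order on its vertices, identifying the vertex set with $\{1,\dots,n\}$ (isomorphic ordered forests identified); it is heap-ordered if $i\twoheadrightarrow j$ implies $i>j$. $\mathbf H_{ho}$ is the $K$-vector space ($K=\mathbb R$ or $\mathbb C$) with basis heap-ordered forests (including the empty forest $1$), graded by number of vertices, with product $\mathbb F\mathbb G$ = disjoint union where the vertices of $\mathbb F$ (with $k$ vertices) keep labels $1..k$ and vertex $j$ of $\mathbb G$ gets label $k+j$, and coproduct $\Delta(\mathbb F)=\sum_{\vec v\models V(\mathbb F)}\mathrm{Roo}_{\vec v}\mathbb F\otimes\mathrm{Lea}_{\vec v}\mathbb F$, where an admissible cut $\vec v$ is a (possibly empty) set of vertices no two of which satisfy $v\twoheadrightarrow w$, $\mathrm{Lea}_{\vec v}\mathbb F$ is the subforest on $\vec v\cup\{w:\exists v\in\vec v, w\twoheadrightarrow v\}$, $\mathrm{Roo}_{\vec v}\mathbb F$ the subforest on the remaining vertices, both ordered by restriction. $\Sigma_n$ is the symmetric group with $(\sigma\circ\tau)(i)=\sigma(\tau(i))$; $(\sigma\otimes\tau)(i)=\sigma(i)$ for $i\le k$ and $k+\tau(i-k)$ for $i>k$ ($\sigma\in\Sigma_k,\tau\in\Sigma_l$);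 $Sh(k,l)=\{\zeta\in\Sigma_{k+l}:\zeta^{-1}(1)<\dots<\zeta^{-1}(k),\ \zeta^{-1}(k+1)<\dots<\zeta^{-1}(k+l)\}$. $\mathbf{FQSym}$ is the graded vector space with basis $\bigsqcup_{n\ge0}\Sigma_n$, product $\sigma\cdot\tau=\sum_{\epsilon\in Sh(k,l)}(\sigma\otimes\tau)\circ\epsilon$, coproduct $\Delta(\sigma)=\sum_{k=0}^n\sigma_1^{(k)}\otimes\sigma_2^{(k)}$ where $\sigma_1^{(k)},\sigma_2^{(k)}$ are the standardizations of the words $(\sigma(1),\dots,\sigma(k))$ and $(\sigma(k+1),\dots,\sigma(n))$. For an ordered forest $\mathbb F$ with $n$ vertices, $S_{\mathbb F}=\{\sigma\in\Sigma_n: i\twoheadrightarrow j\Rightarrow\sigma^{-1}(i)>\sigma^{-1}(j)\}$, and $\Theta(\mathbb F)=\sum_{\sigma\in S_{\mathbb F}}\sigma$, extended linearly. *)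

theory Defs
  imports Main "HOL.Real_Vector_Spaces"
begin

section \<open>Vectors: finitely supported coefficient functions over a basis\<close>

definition vsupp :: "('b \<Rightarrow> 'k::zero) \<Rightarrow> 'b set" where
  "vsupp v = {b. v b \<noteq> 0}"

text \<open>The K-vector space with basis B: finitely supported functions on B.\<close>
definition fvecs :: "'b set \<Rightarrow> ('b \<Rightarrow> 'k::zero) set" where
  "fvecs B = {v. finite (vsupp v) \<and> vsupp v \<subseteq> B}"

definition delta :: "'b \<Rightarrow> 'b \<Rightarrow> 'k::{zero,one}" where
  "delta x = (\<lambda>y. if y = x then 1 else 0)"

definition lext :: "('b \<Rightarrow> 'c \<Rightarrow> 'k::comm_ring_1) \<Rightarrow> ('b \<Rightarrow> 'k) \<Rightarrow> ('c \<Rightarrow> 'k)" where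
  "lext f v = (\<lambda>c. \<Sum>b\<in>vsupp v. v b * f b c)"

definition bext :: "('b \<Rightarrow> 'b \<Rightarrow> 'c \<Rightarrow> 'k::comm_ring_1) \<Rightarrow> ('b \<Rightarrow> 'k) \<Rightarrow> ('b \<Rightarrow> 'k) \<Rightarrow> ('c \<Rightarrow> 'k)" where
  "bext m u v = (\<lambda>c. \<Sum>a\<in>vsupp u. \<Sum>b\<in>vsupp v. u a * v b * m a b c)"

text \<open>Tensor product of two basis-level maps; tensors are vectors on pairs of basis elements.\<close>
definition tens :: "('a \<Rightarrow> 'c \<Rightarrow> 'k::times) \<Rightarrow> ('b \<Rightarrow> 'd \<Rightarrow> 'k) \<Rightarrow> ('a \<times> 'b) \<Rightarrow> ('c \<times> 'd) \<Rightarrow> 'k" where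
  "tens f g = (\<lambda>(a, b) (c, d). f a c * g b d)"

text \<open>An ordered forest with n vertices has vertex set {1..n}; it is encoded by the list
  ps of length n where ps!(i-1) is the parent of vertex i (the vertex the edge out of i
  points to, towards the root), and 0 if i is a root. Isomorphic ordered forests have the
  same encoding, so this identifies isomorphic ordered forests.\<close>

definition fedges :: "nat list \<Rightarrow> (nat \<times> nat) set" where
  "fedges ps = {(i, ps ! (i - 1)) | i. 1 \<le> i \<and> i \<le> length ps \<and> ps ! (i - 1) \<noteq> 0}"

text \<open>reach ps contains (v,w) iff v \<twoheadrightarrow> w (oriented path from v to w).\<close>
definition reach :: "nat list \<Rightarrow> (nat \<times> nat) set" where
  "reach ps = (fedges ps)\<^sup>+"

definition ordered_forest :: "nat list \<Rightarrow> bool" where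
  "ordered_forest ps \<longleftrightarrow> (\<forall>i < length ps. ps ! i \<le> length ps) \<and> (\<forall>v. (v, v) \<notin> reach ps)"

definition heap_ordered :: "nat list \<Rightarrow> bool" where
  "heap_ordered ps \<longleftrightarrow> ordered_forest ps \<and> (\<forall>i j. (i, j) \<in> reach ps \<longrightarrow> i > j)"

text \<open>The basis of H_ho (including the empty forest []).\<close>
definition HO :: "nat list set" where
  "HO = {ps. heap_ordered ps}"

text \<open>Product of forests: disjoint union, vertices of the second forest shifted by k.\<close>
definition fprod :: "nat list \<Rightarrow> nat list \<Rightarrow> nat list" where
  "fprod ps qs = ps @ map (\<lambda>p. if p = 0 then 0 else p + length ps) qs"

definition admissible_cut :: "nat list \<Rightarrow> nat set \<Rightarrow> bool" where
  "admissible_cut ps vs \<longleftrightarrow> vs \<subseteq> {1..length ps} \<and>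
     (\<forall>v\<in>vs. \<forall>w\<in>vs. (v, w) \<notin> reach ps)"

definition lea_set :: "nat list \<Rightarrow> nat set \<Rightarrow> nat set" where
  "lea_set ps vs = vs \<union> {w. \<exists>v\<in>vs. (w, v) \<in> reach ps}"

definition roo_set :: "nat list \<Rightarrow> nat set \<Rightarrow> nat set" where
  "roo_set ps vs = {1..length ps} - lea_set ps vs"

text \<open>Subforest induced on a vertex set S, relabelled by restriction of the order.\<close>
definition restrict_forest :: "nat list \<Rightarrow> nat set \<Rightarrow> nat list" where
  "restrict_forest ps S =
     map (\<lambda>v. let p = ps ! (v - 1) in if p \<in> S then card {u\<in>S. u \<le> p} else 0)
         (sorted_list_of_set S)"

definition Delta_H :: "nat list \<Rightarrow> (nat list \<times> nat list) \<Rightarrow> 'k::comm_ring_1" where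
  "Delta_H ps = (\<lambda>x. of_nat (card {vs. admissible_cut ps vs \<and>
        (restrict_forest ps (roo_set ps vs), restrict_forest ps (lea_set ps vs)) = x}))"

definition mult_H :: "(nat list \<Rightarrow> 'k::comm_ring_1) \<Rightarrow> (nat list \<Rightarrow> 'k) \<Rightarrow> (nat list \<Rightarrow> 'k)" where
  "mult_H u v = bext (\<lambda>F G. delta (fprod F G)) u v"

definition comult_H :: "(nat list \<Rightarrow> 'k::comm_ring_1) \<Rightarrow> (nat list \<times> nat list \<Rightarrow> 'k)" where
  "comult_H u = lext Delta_H u"

text \<open>Counit: linear extension of F \<mapsto> 1 if F is empty, 0 otherwise.\<close>
definition counit :: "(nat list \<Rightarrow> 'k::comm_ring_1) \<Rightarrow> 'k" where
  "counit u = u []"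

text \<open>A permutation sigma of {1..n} is encoded as the list [sigma(1), ..., sigma(n)].\<close>
definition perm_list :: "nat list \<Rightarrow> bool" where
  "perm_list xs \<longleftrightarrow> distinct xs \<and> set xs = {1..length xs}"

definition FQ :: "nat list set" where
  "FQ = {xs. perm_list xs}"

text \<open>pos s i = s^{-1}(i) (1-based position of value i in the list s).\<close>
definition pos :: "nat list \<Rightarrow> nat \<Rightarrow> nat" where
  "pos s i = Suc (LEAST k. k < length s \<and> s ! k = i)"

text \<open>(s o t)(i) = s(t(i)).\<close>
definition pcomp :: "nat list \<Rightarrow> nat list \<Rightarrow> nat list" where
  "pcomp s t = map (\<lambda>i. s ! (i - 1)) t"

definition ptens :: "nat list \<Rightarrow> nat list \<Rightarrow> nat list" where
  "ptens s t = s @ map (\<lambda>x. x + length s) t"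

definition shuffles :: "nat \<Rightarrow> nat \<Rightarrow> nat list set" where
  "shuffles k l = {z. perm_list z \<and> length z = k + l \<and>
      (\<forall>a b. 1 \<le> a \<and> a < b \<and> b \<le> k \<longrightarrow> pos z a < pos z b) \<and>
      (\<forall>a b. k + 1 \<le> a \<and> a < b \<and> b \<le> k + l \<longrightarrow> pos z a < pos z b)}"

definition pprod :: "nat list \<Rightarrow> nat list \<Rightarrow> nat list \<Rightarrow> 'k::comm_ring_1" where
  "pprod s t = (\<lambda>r. of_nat (card {e \<in> shuffles (length s) (length t). pcomp (ptens s t) e = r}))"

definition std :: "nat list \<Rightarrow> nat list" where
  "std w = map (\<lambda>x. card {y \<in> set w. y \<le> x}) w"

definition Delta_FQ :: "nat list \<Rightarrow> (nat list \<times> nat list) \<Rightarrow> 'k::comm_ring_1" where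
  "Delta_FQ s = (\<lambda>x. of_nat (card {k. k \<le> length s \<and> (std (take k s), std (drop k s)) = x}))"

definition mult_FQ :: "(nat list \<Rightarrow> 'k::comm_ring_1) \<Rightarrow> (nat list \<Rightarrow> 'k) \<Rightarrow> (nat list \<Rightarrow> 'k)" where
  "mult_FQ u v = bext pprod u v"

definition comult_FQ :: "(nat list \<Rightarrow> 'k::comm_ring_1) \<Rightarrow> (nat list \<times> nat list \<Rightarrow> 'k)" where
  "comult_FQ u = lext Delta_FQ u"

definition S_F :: "nat list \<Rightarrow> nat list set" where
  "S_F ps = {s. perm_list s \<and> length s = length ps \<and>
      (\<forall>i j. (i, j) \<in> reach ps \<longrightarrow> pos s i > pos s j)}"

definition Theta :: "nat list \<Rightarrow> nat list \<Rightarrow> 'k::comm_ring_1" where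
  "Theta ps = (\<lambda>s. if s \<in> S_F ps then 1 else 0)"

definition Theta_lin :: "(nat list \<Rightarrow> 'k::comm_ring_1) \<Rightarrow> (nat list \<Rightarrow> 'k)" where
  "Theta_lin v = lext Theta v"

end

theory Submission
  imports Defs
begin


definition before :: "nat list \<Rightarrow> nat \<Rightarrow> nat \<Rightarrow> bool" where
  "before w x y \<longleftrightarrow> (\<exists>u v. w = u @ v \<and> x \<in> set u \<and> y \<in> set v)"

lemma pos_nth: "distinct w \<Longrightarrow> i < length w \<Longrightarrow> pos w (w!i) = Suc i"
  unfolding pos_def
  by (rule arg_cong[where f=Suc], rule Least_equality) (auto simp: nth_eq_iff_index_eq)

lemma pos_less_iff_before:
  assumes d: "distinct w" and x: "x \<in> set w" and y: "y \<in> set w"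
  shows "pos w x < pos w y \<longleftrightarrow> before w x y"
proof -
  obtain i where i: "i < length w" "x = w!i" using x by (auto simp: in_set_conv_nth)
  obtain j where j: "j < length w" "y = w!j" using y by (auto simp: in_set_conv_nth)
  have px: "pos w x = Suc i" using i d pos_nth by simp
  have py: "pos w y = Suc j" using j d pos_nth by simp
  show ?thesis
  proof
    assume "pos w x < pos w y"
    hence ij: "i < j" using px py by simp
    have "w = take j w @ drop j w" by simp
    moreover have "x \<in> set (take j w)" using i ij j by (auto simp: in_set_conv_nth intro!: exI[of _ i])
    moreover have "y \<in> set (drop j w)" using j by (auto simp: in_set_conv_nth intro!: exI[of _ 0])
    ultimately show "before w x y" unfolding before_def by blast
  next
    assume "before w x y"
    then obtain u v where uv: "w = u @ v" "x \<in> set u" "y \<in> set v" unfolding before_def by blast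
    obtain a where a: "a < length u" "x = u!a" using uv by (auto simp: in_set_conv_nth)
    obtain b where b: "b < length v" "y = v!b" using uv by (auto simp: in_set_conv_nth)
    have "w!a = x" using a uv by (simp add: nth_append)
    hence "a = i" using d i a uv by (simp add: nth_eq_iff_index_eq)
    have "w!(length u + b) = y" using b uv by (simp add: nth_append)
    hence "length u + b = j" using d j b uv nth_eq_iff_index_eq[of w "length u + b" j] by simp
    thus "pos w x < pos w y" using px py \<open>a = i\<close> a by simp
  qed
qed

lemma before_set: "before w x y \<Longrightarrow> x \<in> set w \<and> y \<in> set w"
  unfolding before_def by auto

lemma before_trans: "distinct w \<Longrightarrow> before w x y \<Longrightarrow> before w y z \<Longrightarrow> before w x z"
proof -
  assume a: "distinct w" "before w x y" "before w y z"
  hence s: "x \<in> set w" "y \<in> set w" "z \<in> set w" using before_set by blast+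
  hence "pos w x < pos w y" "pos w y < pos w z" using a pos_less_iff_before by blast+
  hence "pos w x < pos w z" by simp
  thus ?thesis using a s pos_less_iff_before by blast
qed

lemma before_asym: "distinct w \<Longrightarrow> before w x y \<Longrightarrow> \<not> before w y x"
proof
  assume a: "distinct w" "before w x y" "before w y x"
  hence s: "x \<in> set w" "y \<in> set w" using before_set by blast+
  hence "pos w x < pos w y" "pos w y < pos w x" using a pos_less_iff_before by blast+
  thus False by simp
qed

lemma before_irrefl: "distinct w \<Longrightarrow> \<not> before w x x"
  using before_asym by blast

lemma before_appI1: "before u x y \<Longrightarrow> before (u @ v) x y"
proof -
  assume "before u x y"
  then obtain u1 v1 where "u = u1 @ v1" "x \<in> set u1" "y \<in> set v1" unfolding before_def by blast
  thus ?thesis unfolding before_def by (intro exI[of _ u1] exI[of _ "v1 @ v"]) auto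
qed

lemma before_appI2: "before v x y \<Longrightarrow> before (u @ v) x y"
proof -
  assume "before v x y"
  then obtain u1 v1 where "v = u1 @ v1" "x \<in> set u1" "y \<in> set v1" unfolding before_def by blast
  thus ?thesis unfolding before_def by (intro exI[of _ "u @ u1"] exI[of _ v1]) auto
qed

lemma before_appI3: "x \<in> set u \<Longrightarrow> y \<in> set v \<Longrightarrow> before (u @ v) x y"
  unfolding before_def by blast

lemma filter_eq_appendD:
  "filter P w = u' @ v' \<Longrightarrow> \<exists>u v. w = u @ v \<and> filter P u = u' \<and> filter P v = v'"
proof (induction w arbitrary: u')
  case Nil thus ?case by auto
next
  case (Cons a w)
  show ?case
  proof (cases "P a")
    case True
    show ?thesis
    proof (cases u')
      case Nil
      thus ?thesis using Cons.prems by (intro exI[of _ "[]"] exI[of _ "a # w"]) auto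
    next
      case (Cons b u'')
      with Cons.prems True have "a = b" "filter P w = u'' @ v'" by auto
      from Cons.IH[OF this(2)] obtain u v where "w = u @ v" "filter P u = u''" "filter P v = v'" by blast
      thus ?thesis using True Cons \<open>a = b\<close> by (intro exI[of _ "a # u"] exI[of _ v]) auto
    qed
  next
    case False
    with Cons.prems have "filter P w = u' @ v'" by auto
    from Cons.IH[OF this] obtain u v where "w = u @ v" "filter P u = u'" "filter P v = v'" by blast
    thus ?thesis using False by (intro exI[of _ "a # u"] exI[of _ v]) auto
  qed
qed

lemma before_filter_iff: "before (filter P w) x y \<longleftrightarrow> before w x y \<and> P x \<and> P y"
proof
  assume "before (filter P w) x y"
  then obtain u' v' where "filter P w = u' @ v'" "x \<in> set u'" "y \<in> set v'" unfolding before_def by blast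
  moreover obtain u v where "w = u @ v" "filter P u = u'" "filter P v = v'"
    using filter_eq_appendD[OF calculation(1)] by blast
  ultimately have "x \<in> set u" "P x" "y \<in> set v" "P y" "w = u @ v" by auto
  thus "before w x y \<and> P x \<and> P y" unfolding before_def by blast
next
  assume "before w x y \<and> P x \<and> P y"
  then obtain u v where "w = u @ v" "x \<in> set u" "y \<in> set v" "P x" "P y" unfolding before_def by blast
  thus "before (filter P w) x y" unfolding before_def
    by (intro exI[of _ "filter P u"] exI[of _ "filter P v"]) auto
qed

lemma before_map: "before w x y \<Longrightarrow> before (map f w) (f x) (f y)"
  unfolding before_def by (metis map_append image_eqI set_map)

lemma before_map_inj:
  assumes "inj_on f (set w)" "x \<in> set w" "y \<in> set w" "before (map f w) (f x) (f y)"
  shows "before w x y"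
proof -
  obtain u' v' where uv: "map f w = u' @ v'" "f x \<in> set u'" "f y \<in> set v'"
    using assms(4) unfolding before_def by blast
  then obtain u v where "w = u @ v" "map f u = u'" "map f v = v'" by (auto simp: map_eq_append_conv)
  moreover then obtain x' y' where "x' \<in> set u" "f x' = f x" "y' \<in> set v" "f y' = f y" using uv by auto
  moreover have "x' = x" "y' = y" using assms(1-3) calculation by (auto simp: inj_on_def)
  ultimately show ?thesis unfolding before_def by blast
qed

lemma before_take_drop: "x \<in> set (take k w) \<Longrightarrow> y \<in> set (drop k w) \<Longrightarrow> before w x y"
  unfolding before_def by (metis append_take_drop_id)

lemma before_drop_closed:
  assumes "distinct w" "before w x y" "x \<in> set (drop k w)"
  shows "y \<in> set (drop k w)"
proof (rule ccontr)
  assume "y \<notin> set (drop k w)"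
  moreover have "y \<in> set w" using assms before_set by blast
  ultimately have "y \<in> set (take k w)" by (metis Un_iff append_take_drop_id set_append)
  hence "before w y x" using assms before_take_drop by blast
  thus False using assms before_asym by blast
qed

lemma before_sub: "distinct (u @ v) \<Longrightarrow> before (u @ v) x y \<Longrightarrow> x \<in> set u \<Longrightarrow> y \<in> set u \<Longrightarrow> before u x y"
proof -
  assume a: "distinct (u @ v)" "before (u @ v) x y" "x \<in> set u" "y \<in> set u"
  have "filter (\<lambda>z. z \<in> set u) v = []" using a(1) by (intro filter_False) auto
  hence "filter (\<lambda>z. z \<in> set u) (u @ v) = u" by simp
  moreover have "before (filter (\<lambda>z. z \<in> set u) (u @ v)) x y" using a before_filter_iff by blast
  ultimately show ?thesis by simp
qed

lemma before_sub2: "distinct (u @ v) \<Longrightarrow> before (u @ v) x y \<Longrightarrow> x \<in> set v \<Longrightarrow> y \<in> set v \<Longrightarrow> before v x y"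
proof -
  assume a: "distinct (u @ v)" "before (u @ v) x y" "x \<in> set v" "y \<in> set v"
  have "filter (\<lambda>z. z \<in> set v) u = []" using a(1) by (intro filter_False) auto
  hence "filter (\<lambda>z. z \<in> set v) (u @ v) = v" by simp
  moreover have "before (filter (\<lambda>z. z \<in> set v) (u @ v)) x y" using a before_filter_iff by blast
  ultimately show ?thesis by simp
qed

section \<open>Forest basics\<close>

lemma fedges_iff: "(i, j) \<in> fedges ps \<longleftrightarrow> 1 \<le> i \<and> i \<le> length ps \<and> ps ! (i - 1) \<noteq> 0 \<and> j = ps ! (i - 1)"
  unfolding fedges_def by auto

lemma reach_trans_prop:
  assumes "\<And>i j. (i, j) \<in> fedges ps \<Longrightarrow> R i j" "\<And>a b c. R a b \<Longrightarrow> R b c \<Longrightarrow> R a c"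
    and "(i, j) \<in> reach ps"
  shows "R i j"
  using assms(3) unfolding reach_def
proof (induction rule: trancl_induct)
  case (base y) thus ?case using assms(1) by blast
next
  case (step y z) thus ?case using assms(1,2) by blast
qed

lemma fedges_reach: "(i, j) \<in> fedges ps \<Longrightarrow> (i, j) \<in> reach ps"
  unfolding reach_def by auto

lemma S_F_iff:
  "s \<in> S_F ps \<longleftrightarrow> perm_list s \<and> length s = length ps \<and>
     (\<forall>i. 1 \<le> i \<and> i \<le> length ps \<and> ps!(i-1) \<noteq> 0 \<longrightarrow> pos s (ps!(i-1)) < pos s i)"
proof -
  have "(\<forall>i j. (i, j) \<in> reach ps \<longrightarrow> pos s i > pos s j) \<longleftrightarrow>
        (\<forall>i. 1 \<le> i \<and> i \<le> length ps \<and> ps!(i-1) \<noteq> 0 \<longrightarrow> pos s (ps!(i-1)) < pos s i)"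
  proof
    assume "\<forall>i j. (i, j) \<in> reach ps \<longrightarrow> pos s i > pos s j"
    thus "\<forall>i. 1 \<le> i \<and> i \<le> length ps \<and> ps!(i-1) \<noteq> 0 \<longrightarrow> pos s (ps!(i-1)) < pos s i"
      using fedges_reach fedges_iff by blast
  next
    assume h: "\<forall>i. 1 \<le> i \<and> i \<le> length ps \<and> ps!(i-1) \<noteq> 0 \<longrightarrow> pos s (ps!(i-1)) < pos s i"
    show "\<forall>i j. (i, j) \<in> reach ps \<longrightarrow> pos s i > pos s j"
    proof (intro allI impI)
      fix i j assume "(i, j) \<in> reach ps"
      thus "pos s i > pos s j"
        using reach_trans_prop[of ps "\<lambda>i j. pos s j < pos s i" i j] h by (auto simp: fedges_iff)
    qed
  qed
  thus ?thesis unfolding S_F_def by auto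
qed

lemma heap_ordered_iff: "heap_ordered ps \<longleftrightarrow> (\<forall>i < length ps. ps ! i \<le> i)"
proof
  assume h: "heap_ordered ps"
  show "\<forall>i < length ps. ps ! i \<le> i"
  proof (intro allI impI)
    fix i assume i: "i < length ps"
    show "ps ! i \<le> i"
    proof (cases "ps ! i = 0")
      case False
      hence "(Suc i, ps ! i) \<in> fedges ps" using i by (auto simp: fedges_iff)
      hence "(Suc i, ps ! i) \<in> reach ps" by (rule fedges_reach)
      hence "ps ! i < Suc i" using h unfolding heap_ordered_def by blast
      thus ?thesis by simp
    qed simp
  qed
next
  assume h: "\<forall>i < length ps. ps ! i \<le> i"
  have e: "1 \<le> i \<Longrightarrow> i \<le> length ps \<Longrightarrow> ps!(i-1) < i" for i
  proof -
    assume "1 \<le> i" "i \<le> length ps"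
    hence "ps!(i-1) \<le> i - 1" using h by simp
    thus ?thesis using \<open>1 \<le> i\<close> by simp
  qed
  have r: "(i, j) \<in> reach ps \<Longrightarrow> i > j" for i j
    using reach_trans_prop[of ps "\<lambda>i j. j < i" i j] e by (auto simp: fedges_iff)
  have "\<forall>i < length ps. ps ! i \<le> length ps" using h by (metis less_imp_le_nat order_trans)
  thus "heap_ordered ps" unfolding heap_ordered_def ordered_forest_def using r by blast
qed

lemma HO_iff: "ps \<in> HO \<longleftrightarrow> (\<forall>i < length ps. ps ! i \<le> i)"
  unfolding HO_def using heap_ordered_iff by simp

lemma reach_range:
  assumes "(i, j) \<in> reach ps" "\<forall>k < length ps. ps ! k \<le> length ps"
  shows "i \<in> {1..length ps} \<and> j \<in> {1..length ps}"
proof -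
  have h: "1 \<le> i \<Longrightarrow> i \<le> length ps \<Longrightarrow> ps!(i-1) \<le> length ps" for i using assms(2) by simp
  have "(i', j') \<in> fedges ps \<Longrightarrow> i' \<in> {1..length ps} \<and> j' \<in> {1..length ps}" for i' j'
    using h[of i'] by (auto simp: fedges_iff)
  thus ?thesis using reach_trans_prop[of ps "\<lambda>i j. i \<in> {1..length ps} \<and> j \<in> {1..length ps}" i j] assms
    by blast
qed

lemma perm_list_set: "perm_list s \<Longrightarrow> set s = {1..length s}"
  unfolding perm_list_def by simp

lemma S_F_before:
  assumes "\<forall>k < length ps. ps ! k \<le> length ps"
  shows "s \<in> S_F ps \<longleftrightarrow> perm_list s \<and> length s = length ps \<and>
     (\<forall>i. 1 \<le> i \<and> i \<le> length ps \<and> ps!(i-1) \<noteq> 0 \<longrightarrow> before s (ps!(i-1)) i)"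
proof -
  { assume p: "perm_list s" "length s = length ps"
    fix i assume i: "1 \<le> i" "i \<le> length ps" "ps!(i-1) \<noteq> 0"
    have "ps!(i-1) \<le> length ps" using assms i by auto
    hence "ps!(i-1) \<in> set s" "i \<in> set s" using p i perm_list_set[of s] by auto
    hence "pos s (ps!(i-1)) < pos s i \<longleftrightarrow> before s (ps!(i-1)) i"
      using p pos_less_iff_before perm_list_def by blast }
  thus ?thesis unfolding S_F_iff by blast
qed

lemma S_F_reach_before:
  assumes "s \<in> S_F ps" "(i, j) \<in> reach ps" "\<forall>k < length ps. ps ! k \<le> length ps"
  shows "before s j i"
proof -
  have "pos s i > pos s j" using assms unfolding S_F_def by blast
  moreover have "i \<in> set s" "j \<in> set s" using reach_range[OF assms(2,3)] assms(1)
    unfolding S_F_def perm_list_def by auto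
  ultimately show ?thesis using assms(1) pos_less_iff_before unfolding S_F_def perm_list_def by blast
qed




lemma lext_eq:
  assumes "finite A" "vsupp v \<subseteq> A"
  shows "lext f v c = (\<Sum>b\<in>A. v b * f b c)"
  unfolding lext_def
  by (rule sum.mono_neutral_left) (use assms in \<open>auto simp: vsupp_def\<close>)

lemma bext_eq:
  assumes "finite A" "vsupp u \<subseteq> A" "finite B" "vsupp v \<subseteq> B"
  shows "bext m u v c = (\<Sum>a\<in>A. \<Sum>b\<in>B. u a * v b * m a b c)"
proof -
  have "bext m u v c = (\<Sum>a\<in>vsupp u. \<Sum>b\<in>B. u a * v b * m a b c)"
    unfolding bext_def
    by (rule sum.cong[OF refl], rule sum.mono_neutral_left) (use assms in \<open>auto simp: vsupp_def\<close>)
  also have "\<dots> = (\<Sum>a\<in>A. \<Sum>b\<in>B. u a * v b * m a b c)"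
    by (rule sum.mono_neutral_left) (use assms in \<open>auto simp: vsupp_def\<close>)
  finally show ?thesis .
qed

lemma vsupp_lext: "vsupp (lext f v) \<subseteq> (\<Union>b\<in>vsupp v. vsupp (f b))"
proof
  fix c assume "c \<in> vsupp (lext f v)"
  hence "(\<Sum>b\<in>vsupp v. v b * f b c) \<noteq> 0" unfolding vsupp_def lext_def by simp
  then obtain b where "b \<in> vsupp v" "v b * f b c \<noteq> 0" by (meson sum.neutral)
  thus "c \<in> (\<Union>b\<in>vsupp v. vsupp (f b))" unfolding vsupp_def by auto
qed

lemma vsupp_bext: "vsupp (bext m u v) \<subseteq> (\<Union>a\<in>vsupp u. \<Union>b\<in>vsupp v. vsupp (m a b))"
proof
  fix c assume "c \<in> vsupp (bext m u v)"
  hence "(\<Sum>a\<in>vsupp u. \<Sum>b\<in>vsupp v. u a * v b * m a b c) \<noteq> 0" unfolding vsupp_def bext_def by simp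
  then obtain a where "a \<in> vsupp u" "(\<Sum>b\<in>vsupp v. u a * v b * m a b c) \<noteq> 0" by (meson sum.neutral)
  then obtain b where "b \<in> vsupp v" "u a * v b * m a b c \<noteq> 0" by (meson sum.neutral)
  hence "m a b c \<noteq> 0" by auto
  thus "c \<in> (\<Union>a\<in>vsupp u. \<Union>b\<in>vsupp v. vsupp (m a b))" using \<open>a \<in> vsupp u\<close> \<open>b \<in> vsupp v\<close>
    unfolding vsupp_def by blast
qed

definition PL :: "nat \<Rightarrow> nat list set" where
  "PL N = {s. perm_list s \<and> length s \<le> N}"

lemma finite_PL: "finite (PL N)"
proof -
  have "PL N \<subseteq> {xs. set xs \<subseteq> {1..N} \<and> length xs \<le> N}"
    unfolding PL_def perm_list_def by auto
  thus ?thesis using finite_lists_length_le[of "{1..N}" N] finite_subset by blast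
qed

lemma S_F_sub: "S_F F \<subseteq> PL (length F)"
  unfolding S_F_def PL_def by auto

lemma S_F_sub2: "length F \<le> N \<Longrightarrow> S_F F \<subseteq> PL N"
  unfolding S_F_def PL_def by auto

lemma vsupp_Theta: "vsupp (Theta F :: nat list \<Rightarrow> 'k::comm_ring_1) = S_F F"
  unfolding vsupp_def Theta_def by auto

lemma fvecs_finite: "u \<in> fvecs B \<Longrightarrow> finite (vsupp u)"
  unfolding fvecs_def by simp

lemma fvecs_sub: "u \<in> fvecs B \<Longrightarrow> vsupp u \<subseteq> B"
  unfolding fvecs_def by simp

lemma finite_bounded_len: "finite V \<Longrightarrow> \<exists>N. \<forall>F\<in>V. length (F::nat list) \<le> N"
  by (rule exI[of _ "Max (length ` V)"]) auto

lemma Theta_lin_vsupp: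
  assumes "finite (vsupp u)" "\<forall>F\<in>vsupp u. length F \<le> N"
  shows "vsupp (Theta_lin u :: nat list \<Rightarrow> 'k::comm_ring_1) \<subseteq> PL N"
proof -
  have "vsupp (Theta_lin u :: nat list \<Rightarrow> 'k) \<subseteq> (\<Union>b\<in>vsupp u. vsupp (Theta b :: nat list \<Rightarrow> 'k))"
    unfolding Theta_lin_def by (rule vsupp_lext)
  also have "\<dots> \<subseteq> PL N" using assms S_F_sub2 by (auto simp: vsupp_Theta)
  finally show ?thesis .
qed

lemma Theta_lin_eq:
  assumes "finite A" "vsupp u \<subseteq> A"
  shows "Theta_lin u s = (\<Sum>F\<in>A. u F * Theta F s)"
  unfolding Theta_lin_def using lext_eq[OF assms] .

lemma reach_Nil: "reach [] = {}"
  unfolding reach_def fedges_def by auto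

lemma S_F_Nil: "S_F [] = {[]}"
  unfolding S_F_def perm_list_def by (auto simp: reach_Nil)

lemma unit_part: "Theta_lin (delta [] :: nat list \<Rightarrow> 'k::comm_ring_1) = delta []"
proof
  fix c
  have "Theta_lin (delta [] :: nat list \<Rightarrow> 'k) c = (\<Sum>F\<in>{[]}. delta [] F * Theta F c)"
    by (rule Theta_lin_eq) (auto simp: vsupp_def delta_def)
  also have "\<dots> = delta [] c" by (simp add: delta_def Theta_def S_F_Nil)
  finally show "Theta_lin (delta [] :: nat list \<Rightarrow> 'k) c = delta [] c" .
qed

lemma Nil_in_S_F: "[] \<in> S_F F \<longleftrightarrow> F = []"
  using S_F_Nil unfolding S_F_def by auto

lemma counit_part:
  assumes "u \<in> fvecs HO"
  shows "counit (Theta_lin u :: nat list \<Rightarrow> 'k::comm_ring_1) = counit u"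
proof -
  let ?A = "insert [] (vsupp u)"
  have "finite ?A" using fvecs_finite[OF assms] by simp
  hence "Theta_lin u [] = (\<Sum>F\<in>?A. u F * Theta F [])" by (rule Theta_lin_eq) auto
  also have "\<dots> = (\<Sum>F\<in>?A. if F = [] then u F else 0)"
    by (rule sum.cong) (auto simp: Theta_def Nil_in_S_F)
  also have "\<dots> = u []" using \<open>finite ?A\<close> by (simp add: sum.delta)
  finally show ?thesis unfolding counit_def .
qed

lemma length_part: "(Theta F s :: 'k::comm_ring_1) \<noteq> 0 \<Longrightarrow> length s = length F"
  unfolding Theta_def S_F_def by (auto split: if_splits)




lemma pos_in:
  assumes "distinct w" "x \<in> set w"
  shows "1 \<le> pos w x \<and> pos w x \<le> length w \<and> w!(pos w x - 1) = x"
proof -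
  obtain i where "i < length w" "x = w!i" using assms(2) by (auto simp: in_set_conv_nth)
  thus ?thesis using pos_nth[OF assms(1)] by simp
qed

lemma pos_map:
  assumes "inj_on h (set r)" "distinct r" "x \<in> set r"
  shows "pos (map h r) (h x) = pos r x"
proof -
  obtain i where i: "i < length r" "x = r!i" using assms(3) by (auto simp: in_set_conv_nth)
  have "distinct (map h r)" using assms by (simp add: distinct_map)
  hence "pos (map h r) (map h r ! i) = Suc i" using i pos_nth[of "map h r" i] by simp
  moreover have "pos r (r!i) = Suc i" using i assms pos_nth by simp
  ultimately show ?thesis using i by simp
qed

lemma perm_list_iff2:
  assumes "distinct r" "set r \<subseteq> {1..length r}"
  shows "perm_list r"
proof -
  have "card (set r) = length r" using assms distinct_card by blast
  hence "set r = {1..length r}" using assms(2) by (simp add: card_subset_eq)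
  thus ?thesis using assms unfolding perm_list_def by simp
qed

lemma filter_interval:
  assumes pe: "perm_list e" and ab: "1 \<le> a" "b \<le> length e"
    and mono: "\<forall>x y. a \<le> x \<and> x < y \<and> y \<le> b \<longrightarrow> pos e x < pos e y"
  shows "filter (\<lambda>i. a \<le> i \<and> i \<le> b) e = [a..<Suc b]"
proof -
  let ?f = "filter (\<lambda>i. a \<le> i \<and> i \<le> b) e"
  have de: "distinct e" using pe perm_list_def by blast
  have df: "distinct ?f" using de by simp
  have sf: "set ?f = {a..b}" using pe ab unfolding perm_list_def by auto
  have "sorted_wrt (<) ?f"
    unfolding sorted_wrt_iff_nth_less
  proof (intro allI impI)
    fix i j assume ij: "i < j" "j < length ?f"
    have mi: "?f!i \<in> {a..b}" "?f!j \<in> {a..b}" using ij sf nth_mem[of i ?f] nth_mem[of j ?f] by auto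
    have "?f!i \<noteq> ?f!j" using df ij by (simp add: nth_eq_iff_index_eq)
    have "pos ?f (?f!i) < pos ?f (?f!j)" using pos_nth[OF df, of i] pos_nth[OF df, of j] ij by simp
    moreover have mem: "?f!i \<in> set ?f" "?f!j \<in> set ?f" using ij by (meson nth_mem less_trans)+
    ultimately have "before ?f (?f!i) (?f!j)"
      using pos_less_iff_before[OF df mem] by blast
    hence "before e (?f!i) (?f!j)" using before_filter_iff by blast
    hence "pos e (?f!i) < pos e (?f!j)" using pos_less_iff_before[OF de] before_set by blast
    show "?f!i < ?f!j"
    proof (rule ccontr)
      assume "\<not> ?f!i < ?f!j"
      hence "?f!j < ?f!i" using \<open>?f!i \<noteq> ?f!j\<close> by simp
      hence "pos e (?f!j) < pos e (?f!i)" using mono mi by auto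
      thus False using \<open>pos e (?f!i) < pos e (?f!j)\<close> by simp
    qed
  qed
  hence "sorted ?f" using strict_sorted_iff by blast
  moreover have "sorted [a..<Suc b]" "distinct [a..<Suc b]" "set [a..<Suc b] = {a..b}" by (simp_all only: sorted_upt distinct_upt) auto
  ultimately show ?thesis using sorted_distinct_set_unique[of ?f "[a..<Suc b]"] df sf by simp
qed

definition shsplit :: "nat \<Rightarrow> nat list \<Rightarrow> nat list \<times> nat list" where
  "shsplit k r = (filter (\<lambda>x. x \<le> k) r, map (\<lambda>x. x - k) (filter (\<lambda>x. k < x) r))"

lemma pprod_eq:
  assumes ps: "perm_list s" and pt: "perm_list t"
  shows "(pprod s t r :: 'k::comm_ring_1) =
     (if perm_list r \<and> length r = length s + length t \<and> shsplit (length s) r = (s, t) then 1 else 0)"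
proof -
  define k where "k = length s"
  define l where "l = length t"
  define n where "n = k + l"
  define c where "c = ptens s t"
  define g where "g i = c!(i-1)" for i
  have ds: "distinct s" and ss: "set s = {1..k}" using ps unfolding perm_list_def k_def by auto
  have dt: "distinct t" and st: "set t = {1..l}" using pt unfolding perm_list_def l_def by auto
  have gs: "g i = s!(i-1)" if "i \<in> {1..k}" for i
    using that unfolding g_def c_def ptens_def k_def by (auto simp: nth_append)
  have gt: "g i = t!(i-k-1) + k" if "i \<in> {k+1..n}" for i
  proof -
    have "i - 1 = k + (i - k - 1)" using that by auto
    thus ?thesis using that unfolding g_def c_def ptens_def k_def n_def l_def by (auto simp: nth_append)
  qed
  have gr: "g i \<in> {1..n} \<and> (g i \<le> k \<longleftrightarrow> i \<le> k)" if "i \<in> {1..n}" for i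
  proof (cases "i \<le> k")
    case True
    hence "i - 1 < length s" using that k_def by auto
    hence "s!(i-1) \<in> {1..k}" using ss nth_mem by blast
    thus ?thesis using gs[of i] True that n_def by auto
  next
    case False
    hence "i - k - 1 < length t" using that l_def n_def by auto
    hence "t!(i-k-1) \<in> {1..l}" using st nth_mem by blast
    thus ?thesis using gt[of i] False that n_def by auto
  qed
  have ginj: "inj_on g {1..n}"
  proof (rule inj_onI)
    fix i j assume ij: "i \<in> {1..n}" "j \<in> {1..n}" "g i = g j"
    show "i = j"
    proof (cases "i \<le> k")
      case True
      hence jk: "j \<le> k" using gr ij by metis
      have "s!(i-1) = s!(j-1)" using gs True jk ij by simp
      moreover have "i - 1 < length s" "j - 1 < length s" using True jk ij k_def by auto
      ultimately have "i - 1 = j - 1" using ds nth_eq_iff_index_eq[of s "i-1" "j-1"] by simp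
      thus ?thesis using ij by (simp add: atLeastAtMost_iff) arith
    next
      case False
      hence jk: "\<not> j \<le> k" using gr ij by metis
      have "t!(i-k-1) = t!(j-k-1)" using gt False jk ij by simp
      moreover have "i - k - 1 < length t" "j - k - 1 < length t" using False jk ij l_def n_def by auto
      ultimately have "i - k - 1 = j - k - 1" using dt nth_eq_iff_index_eq[of t "i-k-1" "j-k-1"] by simp
      thus ?thesis using False jk by simp
    qed
  qed
  define E where "E = {e \<in> shuffles k l. map g e = r}"
  have shset: "e \<in> shuffles k l \<Longrightarrow> set e = {1..n} \<and> distinct e \<and> length e = n" for e
    unfolding shuffles_def perm_list_def n_def by auto
  have pcomp: "pcomp (ptens s t) e = map g e" for e unfolding pcomp_def g_def c_def by simp
  have cardE: "card E = (if \<exists>e \<in> shuffles k l. map g e = r then 1 else 0)"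
  proof (cases "\<exists>e \<in> shuffles k l. map g e = r")
    case True
    then obtain e0 where e0: "e0 \<in> shuffles k l" "map g e0 = r" by blast
    have "E = {e0}"
    proof
      show "E \<subseteq> {e0}"
      proof
        fix e assume "e \<in> E"
        hence "e \<in> shuffles k l" "map g e = map g e0" using e0 unfolding E_def by auto
        moreover have "inj_on g (set e \<union> set e0)" using shset[OF e0(1)] shset[OF calculation(1)] ginj by simp
        ultimately show "e \<in> {e0}" using map_inj_on by blast
      qed
    qed (use e0 E_def in auto)
    thus ?thesis using True by simp
  next
    case False
    hence "E = {}" unfolding E_def by auto
    thus ?thesis using False by simp
  qed
  have "(\<exists>e \<in> shuffles k l. map g e = r) \<longleftrightarrow> perm_list r \<and> length r = n \<and> shsplit k r = (s, t)"
  proof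
    assume "\<exists>e \<in> shuffles k l. map g e = r"
    then obtain e where e: "e \<in> shuffles k l" "map g e = r" by blast
    have se: "set e = {1..n}" "distinct e" "length e = n" using shset[OF e(1)] by auto
    have pe: "perm_list e" using e(1) unfolding shuffles_def by simp
    have "distinct r" using e se ginj by (auto simp: distinct_map inj_on_subset)
    moreover have "set r \<subseteq> {1..length r}" using e se gr by auto
    ultimately have pr: "perm_list r" by (rule perm_list_iff2)
    have lr: "length r = n" using e se by auto
    have f1: "filter (\<lambda>x. x \<le> k) r = s"
    proof -
      have "filter (\<lambda>x. x \<le> k) r = map g (filter (\<lambda>i. g i \<le> k) e)" using e(2) by (auto simp: filter_map o_def)
      also have "filter (\<lambda>i. g i \<le> k) e = filter (\<lambda>i. 1 \<le> i \<and> i \<le> k) e"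
        by (rule filter_cong) (use se gr in auto)
      also have "\<dots> = [1..<Suc k]"
        by (rule filter_interval[OF pe]) (use e(1) se in \<open>auto simp: shuffles_def n_def\<close>)
      also have "map g [1..<Suc k] = s"
      proof (rule nth_equalityI)
        show "length (map g [1..<Suc k]) = length s" using k_def by (simp del: upt_Suc)
        fix i assume "i < length (map g [1..<Suc k])"
        hence i: "i < k" by (simp del: upt_Suc)
        have "[1..<Suc k] ! i = Suc i" using i by (simp only: nth_upt)
        thus "map g [1..<Suc k] ! i = s ! i" using i gs[of "Suc i"] by (simp del: upt_Suc)
      qed
      finally show ?thesis .
    qed
    have f2: "map (\<lambda>x. x - k) (filter (\<lambda>x. k < x) r) = t"
    proof -
      have "filter (\<lambda>x. k < x) r = map g (filter (\<lambda>i. k < g i) e)" using e(2) by (auto simp: filter_map o_def)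
      also have "filter (\<lambda>i. k < g i) e = filter (\<lambda>i. k + 1 \<le> i \<and> i \<le> n) e"
        by (rule filter_cong) (use se gr in \<open>auto simp: not_le[symmetric]\<close>)
      also have "\<dots> = [Suc k..<Suc n]"
        using filter_interval[OF pe, of "k+1" n] e(1) se by (auto simp: shuffles_def n_def)
      also have "map (\<lambda>x. x - k) (map g [Suc k..<Suc n]) = t"
      proof (rule nth_equalityI)
        show "length (map (\<lambda>x. x - k) (map g [Suc k..<Suc n])) = length t" using n_def l_def by (simp del: upt_Suc)
        fix i assume "i < length (map (\<lambda>x. x - k) (map g [Suc k..<Suc n]))"
        hence i: "i < l" using n_def by (simp del: upt_Suc)
        have "g (Suc k + i) = t!i + k" using gt[of "Suc k + i"] i n_def by simp
        moreover have "[Suc k..<Suc n] ! i = Suc k + i" using i n_def by (simp only: nth_upt)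
        ultimately show "map (\<lambda>x. x - k) (map g [Suc k..<Suc n]) ! i = t ! i" using i n_def by (simp del: upt_Suc)
      qed
      finally show ?thesis .
    qed
    show "perm_list r \<and> length r = n \<and> shsplit k r = (s, t)" using pr lr f1 f2 shsplit_def by simp
  next
    assume h: "perm_list r \<and> length r = n \<and> shsplit k r = (s, t)"
    have sr: "set r = {1..n}" "distinct r" "length r = n" using h unfolding perm_list_def by auto
    have f1: "filter (\<lambda>x. x \<le> k) r = s" and f2: "map (\<lambda>x. x - k) (filter (\<lambda>x. k < x) r) = t"
      using h unfolding shsplit_def by auto
    define h where "h x = (if x \<le> k then pos s x else k + pos t (x - k))" for x
    have gh: "g (h x) = x \<and> h x \<in> {1..n}" if "x \<in> set r" for x
    proof (cases "x \<le> k")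
      case True
      hence "x \<in> set s" using that f1[symmetric] by auto
      hence "1 \<le> pos s x \<and> pos s x \<le> k \<and> s!(pos s x - 1) = x" using pos_in ds k_def by blast
      thus ?thesis using True gs h_def n_def by auto
    next
      case False
      hence "x - k \<in> set t" using that f2[symmetric] by auto
      hence p: "1 \<le> pos t (x-k) \<and> pos t (x-k) \<le> l \<and> t!(pos t (x-k) - 1) = x - k" using pos_in dt l_def by blast
      hence "g (k + pos t (x-k)) = t!(pos t (x-k) - 1) + k" using gt[of "k + pos t (x-k)"] n_def by simp
      thus ?thesis using p False h_def n_def by auto
    qed
    define e where "e = map h r"
    have hinj: "inj_on h (set r)" by (rule inj_onI) (metis gh)
    have ge: "map g e = r" unfolding e_def by (simp add: map_idI gh)
    have de: "distinct e" unfolding e_def using hinj sr by (simp add: distinct_map)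
    have le: "length e = n" using sr e_def by simp
    have pe: "perm_list e" by (rule perm_list_iff2[OF de]) (use gh le in \<open>auto simp: e_def\<close>)
    have c1: "pos e a < pos e b" if ab: "1 \<le> a" "a < b" "b \<le> k" for a b
    proof -
      have m: "a - 1 < length s" "b - 1 < length s" using ab k_def by auto
      have xa: "s!(a-1) \<in> set r" "s!(b-1) \<in> set r" using m f1[symmetric] by (metis filter_is_subset nth_mem subsetD)+
      have ha: "h (s!(a-1)) = a" "h (s!(b-1)) = b"
        using m ab pos_nth[OF ds] ss nth_mem h_def by force+
      have "pos s (s!(a-1)) < pos s (s!(b-1))" using pos_nth[OF ds] m ab by simp
      hence "before s (s!(a-1)) (s!(b-1))"
        using pos_less_iff_before[OF ds nth_mem nth_mem] m by blast
      hence "before r (s!(a-1)) (s!(b-1))" using f1 before_filter_iff by metis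
      hence "pos r (s!(a-1)) < pos r (s!(b-1))" using pos_less_iff_before sr xa by blast
      thus ?thesis using pos_map[OF hinj sr(2)] xa ha e_def by metis
    qed
    have c2: "pos e a < pos e b" if ab: "k + 1 \<le> a" "a < b" "b \<le> n" for a b
    proof -
      have m: "a - k - 1 < length t" "b - k - 1 < length t" using ab l_def n_def by auto
      define xa where "xa = t!(a-k-1) + k"
      define xb where "xb = t!(b-k-1) + k"
      have tin: "t!(a-k-1) - 0 \<in> set t" "t!(b-k-1) \<in> set t" using m by auto
      have rf: "xa \<in> set (filter (\<lambda>x. k < x) r)" "xb \<in> set (filter (\<lambda>x. k < x) r)"
        using tin f2[symmetric] xa_def xb_def by auto
      hence xr: "xa \<in> set r" "xb \<in> set r" by auto
      have ha: "h xa = a" "h xb = b"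
        using m ab pos_nth[OF dt] h_def xa_def xb_def st nth_mem by force+
      have "pos t (t!(a-k-1)) < pos t (t!(b-k-1))" using pos_nth[OF dt] m ab by simp
      hence "before t (t!(a-k-1)) (t!(b-k-1))"
        using pos_less_iff_before[OF dt nth_mem nth_mem] m by blast
      hence "before (map (\<lambda>x. x - k) (filter (\<lambda>x. k < x) r)) ((\<lambda>x. x - k) xa) ((\<lambda>x. x - k) xb)"
        using f2 xa_def xb_def by simp
      hence "before (filter (\<lambda>x. k < x) r) xa xb"
        by (rule before_map_inj[rotated 3]) (use rf in \<open>auto simp: inj_on_def\<close>)
      hence "before r xa xb" using before_filter_iff by metis
      hence "pos r xa < pos r xb" using pos_less_iff_before sr xr by blast
      thus ?thesis using pos_map[OF hinj sr(2)] xr ha e_def by metis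
    qed
    have "e \<in> shuffles k l" unfolding shuffles_def using pe le c1 c2 n_def by auto
    thus "\<exists>e \<in> shuffles k l. map g e = r" using ge by blast
  qed
  moreover have "pprod s t r = (of_nat (card E) :: 'k)"
    unfolding pprod_def E_def k_def l_def pcomp by simp
  ultimately show ?thesis using cardE k_def l_def n_def by simp
qed




lemma quad_swap:
  fixes f :: "'a \<Rightarrow> 's \<Rightarrow> 'k::comm_ring_1"
  shows "(\<Sum>s\<in>S. \<Sum>t\<in>T. (\<Sum>a\<in>A. f a s) * (\<Sum>b\<in>B. g b t) * p s t) =
         (\<Sum>a\<in>A. \<Sum>b\<in>B. \<Sum>s\<in>S. \<Sum>t\<in>T. f a s * g b t * p s t)"
proof -
  have "(\<Sum>s\<in>S. \<Sum>t\<in>T. (\<Sum>a\<in>A. f a s) * (\<Sum>b\<in>B. g b t) * p s t) =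
        (\<Sum>s\<in>S. \<Sum>t\<in>T. \<Sum>a\<in>A. \<Sum>b\<in>B. f a s * g b t * p s t)"
    unfolding sum_product unfolding sum_distrib_right ..
  also have "\<dots> = (\<Sum>s\<in>S. \<Sum>a\<in>A. \<Sum>t\<in>T. \<Sum>b\<in>B. f a s * g b t * p s t)"
    by (rule sum.cong[OF refl], rule sum.swap)
  also have "\<dots> = (\<Sum>a\<in>A. \<Sum>s\<in>S. \<Sum>t\<in>T. \<Sum>b\<in>B. f a s * g b t * p s t)"
    by (rule sum.swap)
  also have "\<dots> = (\<Sum>a\<in>A. \<Sum>s\<in>S. \<Sum>b\<in>B. \<Sum>t\<in>T. f a s * g b t * p s t)"
    by (rule sum.cong[OF refl], rule sum.cong[OF refl], rule sum.swap)
  also have "\<dots> = (\<Sum>a\<in>A. \<Sum>b\<in>B. \<Sum>s\<in>S. \<Sum>t\<in>T. f a s * g b t * p s t)"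
    by (rule sum.cong[OF refl], rule sum.swap)
  finally show ?thesis .
qed

lemma theta_sum:
  assumes "finite Q" "S_F a \<subseteq> Q"
  shows "(\<Sum>s\<in>Q. (Theta a s :: 'k::comm_ring_1) * f s) = (\<Sum>s\<in>S_F a. f s)"
proof -
  have "(\<Sum>s\<in>Q. (Theta a s :: 'k) * f s) = (\<Sum>s\<in>Q. if s \<in> S_F a then f s else 0)"
    by (rule sum.cong) (auto simp: Theta_def)
  also have "\<dots> = (\<Sum>s\<in>{s\<in>Q. s \<in> S_F a}. f s)" using assms(1) by (simp add: sum.inter_filter)
  also have "{s\<in>Q. s \<in> S_F a} = S_F a" using assms(2) by auto
  finally show ?thesis .
qed

lemma sum_sum_delta:
  assumes "finite A" "finite B"
  shows "(\<Sum>a\<in>A. \<Sum>b\<in>B. if a = x \<and> b = y then (1::'k::comm_ring_1) else 0) = (if x \<in> A \<and> y \<in> B then 1 else 0)"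
proof -
  have "(\<Sum>a\<in>A. \<Sum>b\<in>B. if a = x \<and> b = y then (1::'k) else 0) =
        (\<Sum>a\<in>A. if a = x then (if y \<in> B then 1 else 0) else 0)"
    by (rule sum.cong[OF refl]) (use assms in \<open>auto simp: sum.delta'\<close>)
  also have "\<dots> = (if x \<in> A \<and> y \<in> B then 1 else 0)" using assms by (simp add: sum.delta')
  finally show ?thesis .
qed

lemma fprod_nth1: "i < length F \<Longrightarrow> fprod F G ! i = F ! i"
  unfolding fprod_def by (simp add: nth_append)

lemma fprod_nth2: "j < length G \<Longrightarrow> fprod F G ! (length F + j) = (if G!j = 0 then 0 else G!j + length F)"
  unfolding fprod_def by (simp add: nth_append)

lemma length_fprod: "length (fprod F G) = length F + length G"
  unfolding fprod_def by simp

lemma fprod_HO: assumes "F \<in> HO" "G \<in> HO" shows "fprod F G \<in> HO"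
  unfolding HO_iff
proof (intro allI impI)
  fix i assume i: "i < length (fprod F G)"
  show "fprod F G ! i \<le> i"
  proof (cases "i < length F")
    case True thus ?thesis using assms(1) fprod_nth1 HO_iff by simp
  next
    case False
    then obtain j where j: "i = length F + j" by (metis le_add_diff_inverse not_less)
    hence jl: "j < length G" using i length_fprod by simp
    hence "G!j \<le> j" using assms(2) HO_iff by simp
    thus ?thesis using fprod_nth2[OF jl, of F] j by simp
  qed
qed

lemma HO_bound: "F \<in> HO \<Longrightarrow> \<forall>k < length F. F ! k \<le> length F"
  using HO_iff by (meson less_imp_le_nat order_trans)

lemma shsplit_perm:
  assumes pr: "perm_list r" and lr: "length r = k + l"
  shows "perm_list (fst (shsplit k r)) \<and> length (fst (shsplit k r)) = k \<and>
         perm_list (snd (shsplit k r)) \<and> length (snd (shsplit k r)) = l"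
proof -
  have sr: "set r = {1..k+l}" "distinct r" using pr lr unfolding perm_list_def by auto
  let ?s = "filter (\<lambda>x. x \<le> k) r"
  let ?f = "filter (\<lambda>x. k < x) r"
  let ?t = "map (\<lambda>x. x - k) ?f"
  have ss: "set ?s = {1..k}" using sr by auto
  have ds: "distinct ?s" using sr by simp
  have ls: "length ?s = k" using distinct_card[OF ds] ss by simp
  have ps: "perm_list ?s" using ss ds ls unfolding perm_list_def by simp
  have sf: "set ?f = {k+1..k+l}" using sr by auto
  have df: "distinct ?f" using sr by simp
  have lf: "length ?f = l" using distinct_card[OF df] sf by simp
  have "inj_on (\<lambda>x. x - k) (set ?f)" by (rule inj_onI) auto
  hence dt: "distinct ?t" using df by (simp add: distinct_map)
  have "set ?t \<subseteq> {1..length ?t}"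
  proof
    fix y assume "y \<in> set ?t"
    hence "y \<in> (\<lambda>x. x - k) ` set ?f" by (simp only: set_map)
    then obtain x where x: "x \<in> set ?f" "y = x - k" by (rule imageE) blast
    have "x \<in> {k+1..k+l}" using x(1) sf by blast
    hence "y \<in> {1..l}" using x(2) by simp arith
    thus "y \<in> {1..length ?t}" using lf by simp
  qed
  hence pt: "perm_list ?t" by (rule perm_list_iff2[OF dt])
  show ?thesis using ps ls pt lf unfolding shsplit_def by simp
qed

lemma S_F_fprod:
  assumes F: "F \<in> HO" and G: "G \<in> HO" and pr: "perm_list r"
    and lr: "length r = length F + length G"
  shows "r \<in> S_F (fprod F G) \<longleftrightarrow>
         fst (shsplit (length F) r) \<in> S_F F \<and> snd (shsplit (length F) r) \<in> S_F G"
proof -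
  define k where "k = length F"
  define l where "l = length G"
  define sr where "sr = filter (\<lambda>x. x \<le> k) r"
  define fr where "fr = filter (\<lambda>x. k < x) r"
  define tr where "tr = map (\<lambda>x. x - k) fr"
  have spl: "shsplit k r = (sr, tr)" unfolding shsplit_def sr_def tr_def fr_def by simp
  have setr: "set r = {1..k+l}" using pr lr k_def l_def unfolding perm_list_def by auto
  have P: "perm_list sr \<and> length sr = k \<and> perm_list tr \<and> length tr = l"
    using shsplit_perm[OF pr, of k l] lr spl k_def l_def by simp
  have FG: "fprod F G \<in> HO" using fprod_HO F G by blast
  have LHS: "r \<in> S_F (fprod F G) \<longleftrightarrow>
     (\<forall>i. 1 \<le> i \<and> i \<le> k + l \<and> fprod F G!(i-1) \<noteq> 0 \<longrightarrow> before r (fprod F G!(i-1)) i)"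
    using S_F_before[OF HO_bound[OF FG]] pr lr length_fprod k_def l_def by simp
  have B: "sr \<in> S_F F \<longleftrightarrow> (\<forall>i. 1 \<le> i \<and> i \<le> k \<and> F!(i-1) \<noteq> 0 \<longrightarrow> before r (F!(i-1)) i)"
  proof -
    have "before sr (F!(i-1)) i \<longleftrightarrow> before r (F!(i-1)) i" if "1 \<le> i" "i \<le> k" for i
    proof -
      have "F!(i-1) \<le> k" using HO_bound[OF F] that k_def by simp
      thus ?thesis using that before_filter_iff sr_def by simp
    qed
    thus ?thesis using S_F_before[OF HO_bound[OF F]] P k_def by auto
  qed
  have C: "tr \<in> S_F G \<longleftrightarrow> (\<forall>j. 1 \<le> j \<and> j \<le> l \<and> G!(j-1) \<noteq> 0 \<longrightarrow> before r (G!(j-1) + k) (j + k))"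
  proof -
    have "before tr (G!(j-1)) j \<longleftrightarrow> before r (G!(j-1) + k) (j + k)"
      if "1 \<le> j" "j \<le> l" "G!(j-1) \<noteq> 0" for j
    proof -
      have q: "G!(j-1) \<le> l" using HO_bound[OF G] that l_def by simp
      have inf: "G!(j-1) + k \<in> set fr" "j + k \<in> set fr" using setr that q fr_def by auto
      have "before tr (G!(j-1)) j \<longleftrightarrow> before fr (G!(j-1) + k) (j + k)"
      proof
        assume "before tr (G!(j-1)) j"
        hence "before (map (\<lambda>x. x - k) fr) ((\<lambda>x. x - k) (G!(j-1) + k)) ((\<lambda>x. x - k) (j + k))"
          using tr_def by simp
        thus "before fr (G!(j-1) + k) (j + k)"
          by (rule before_map_inj[rotated 3]) (use inf fr_def in \<open>auto simp: inj_on_def\<close>)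
      next
        assume "before fr (G!(j-1) + k) (j + k)"
        from before_map[OF this, of "\<lambda>x. x - k"] show "before tr (G!(j-1)) j" using tr_def by simp
      qed
      also have "\<dots> \<longleftrightarrow> before r (G!(j-1) + k) (j + k)" using before_filter_iff fr_def that by auto
      finally show ?thesis .
    qed
    thus ?thesis using S_F_before[OF HO_bound[OF G]] P l_def by auto
  qed
  have "(\<forall>i. 1 \<le> i \<and> i \<le> k + l \<and> fprod F G!(i-1) \<noteq> 0 \<longrightarrow> before r (fprod F G!(i-1)) i) \<longleftrightarrow>
        (\<forall>i. 1 \<le> i \<and> i \<le> k \<and> F!(i-1) \<noteq> 0 \<longrightarrow> before r (F!(i-1)) i) \<and>
        (\<forall>j. 1 \<le> j \<and> j \<le> l \<and> G!(j-1) \<noteq> 0 \<longrightarrow> before r (G!(j-1) + k) (j + k))"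
    (is "?A \<longleftrightarrow> ?B \<and> ?C")
  proof
    assume A: ?A
    have ?B
    proof (intro allI impI)
      fix i assume i: "1 \<le> i \<and> i \<le> k \<and> F!(i-1) \<noteq> 0"
      thus "before r (F!(i-1)) i" using A[rule_format, of i] fprod_nth1[of "i-1" F G] k_def by auto
    qed
    moreover have ?C
    proof (intro allI impI)
      fix j assume j: "1 \<le> j \<and> j \<le> l \<and> G!(j-1) \<noteq> 0"
      have jl: "j - 1 < length G" using j l_def by arith
      have "k + j - 1 = length F + (j - 1)" using j k_def by arith
      hence "fprod F G ! (k + j - 1) = G!(j-1) + k"
        using fprod_nth2[OF jl, of F] j k_def by simp
      thus "before r (G!(j-1) + k) (j + k)" using A[rule_format, of "k + j"] j by (simp add: add.commute)
    qed
    ultimately show "?B \<and> ?C" by blast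
  next
    assume BC: "?B \<and> ?C"
    show ?A
    proof (intro allI impI)
      fix i assume i: "1 \<le> i \<and> i \<le> k + l \<and> fprod F G!(i-1) \<noteq> 0"
      show "before r (fprod F G!(i-1)) i"
      proof (cases "i \<le> k")
        case True
        thus ?thesis using BC i fprod_nth1[of "i-1" F G] k_def by auto
      next
        case False
        define j where "j = i - k"
        have j: "1 \<le> j" "j \<le> l" "i = k + j" using False i j_def by auto
        have jl: "j - 1 < length G" using j l_def by arith
        have "i - 1 = length F + (j - 1)" using j k_def by arith
        hence e: "fprod F G ! (i - 1) = (if G!(j-1) = 0 then 0 else G!(j-1) + k)"
          using fprod_nth2[OF jl, of F] k_def by simp
        hence "G!(j-1) \<noteq> 0" using i by (cases "G!(j-1) = 0") simp_all
        thus ?thesis using BC j e by (simp add: add.commute)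
      qed
    qed
  qed
  thus ?thesis using LHS B C spl k_def by simp
qed

lemma Theta_fprod:
  assumes F: "F \<in> HO" and G: "G \<in> HO"
  shows "(\<Sum>s\<in>S_F F. \<Sum>t\<in>S_F G. (pprod s t r :: 'k::comm_ring_1)) = Theta (fprod F G) r"
proof -
  have fin: "finite (S_F F)" "finite (S_F G)" using S_F_sub finite_PL finite_subset by blast+
  have pe: "(pprod s t r :: 'k) = (if perm_list r \<and> length r = length F + length G \<and> shsplit (length F) r = (s, t) then 1 else 0)"
    if "s \<in> S_F F" "t \<in> S_F G" for s t
    using pprod_eq[of s t r] that unfolding S_F_def by auto
  show ?thesis
  proof (cases "perm_list r \<and> length r = length F + length G")
    case True
    obtain s0 t0 where st: "shsplit (length F) r = (s0, t0)" by fastforce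
    have "(\<Sum>s\<in>S_F F. \<Sum>t\<in>S_F G. (pprod s t r :: 'k)) =
          (\<Sum>s\<in>S_F F. \<Sum>t\<in>S_F G. if s = s0 \<and> t = t0 then 1 else 0)"
      by (rule sum.cong[OF refl], rule sum.cong[OF refl]) (use pe True st in auto)
    also have "\<dots> = (if s0 \<in> S_F F \<and> t0 \<in> S_F G then 1 else 0)" by (rule sum_sum_delta[OF fin])
    also have "\<dots> = Theta (fprod F G) r"
      using S_F_fprod[OF F G] True st unfolding Theta_def by simp
    finally show ?thesis .
  next
    case False
    hence "r \<notin> S_F (fprod F G)" unfolding S_F_def using length_fprod by auto
    moreover have "(\<Sum>s\<in>S_F F. \<Sum>t\<in>S_F G. (pprod s t r :: 'k)) = 0"
      by (rule sum.neutral, rule ballI, rule sum.neutral) (use pe False in auto)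
    ultimately show ?thesis unfolding Theta_def by simp
  qed
qed

lemma product_part:
  assumes u: "u \<in> fvecs HO" and v: "v \<in> fvecs HO"
  shows "Theta_lin (mult_H u v :: nat list \<Rightarrow> 'k::comm_ring_1) = mult_FQ (Theta_lin u) (Theta_lin v)"
proof
  fix r
  define A where "A = vsupp u"
  define B where "B = vsupp v"
  have fA: "finite A" and fB: "finite B" using u v fvecs_finite A_def B_def by blast+
  have AH: "A \<subseteq> HO" and BH: "B \<subseteq> HO" using u v fvecs_sub A_def B_def by blast+
  obtain N where N: "\<forall>F\<in>A \<union> B. length F \<le> N" using finite_bounded_len[of "A \<union> B"] fA fB by blast
  define Q where "Q = PL N"
  have fQ: "finite Q" using finite_PL Q_def by simp
  define C where "C = (\<lambda>(a, b). fprod a b) ` (A \<times> B)"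
  have fC: "finite C" using fA fB C_def by simp
  have mH: "(mult_H u v :: nat list \<Rightarrow> 'k) c = (\<Sum>a\<in>A. \<Sum>b\<in>B. u a * v b * delta (fprod a b) c)" for c
    unfolding mult_H_def by (rule bext_eq) (use fA fB A_def B_def in auto)
  have sC: "vsupp (mult_H u v :: nat list \<Rightarrow> 'k) \<subseteq> C"
  proof -
    have "vsupp (mult_H u v :: nat list \<Rightarrow> 'k) \<subseteq>
          (\<Union>a\<in>vsupp u. \<Union>b\<in>vsupp v. vsupp (delta (fprod a b) :: nat list \<Rightarrow> 'k))"
      unfolding mult_H_def by (rule vsupp_bext)
    also have "\<dots> \<subseteq> C" unfolding C_def A_def B_def by (auto simp: vsupp_def delta_def split: if_splits)
    finally show ?thesis .
  qed
  have "Theta_lin (mult_H u v :: nat list \<Rightarrow> 'k) r = (\<Sum>c\<in>C. mult_H u v c * Theta c r)"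
    by (rule Theta_lin_eq[OF fC sC])
  also have "\<dots> = (\<Sum>c\<in>C. \<Sum>a\<in>A. \<Sum>b\<in>B. u a * v b * (delta (fprod a b) c * Theta c r))"
    by (simp add: mH sum_distrib_right mult.assoc)
  also have "\<dots> = (\<Sum>a\<in>A. \<Sum>b\<in>B. \<Sum>c\<in>C. u a * v b * (delta (fprod a b) c * Theta c r))"
    by (subst sum.swap, rule sum.cong[OF refl], rule sum.swap)
  also have "\<dots> = (\<Sum>a\<in>A. \<Sum>b\<in>B. u a * v b * Theta (fprod a b) r)"
  proof (rule sum.cong[OF refl], rule sum.cong[OF refl])
    fix a b assume ab: "a \<in> A" "b \<in> B"
    have "fprod a b \<in> C" using ab C_def by auto
    have "(\<Sum>c\<in>C. delta (fprod a b) c * (Theta c r :: 'k)) = (\<Sum>c\<in>C. if c = fprod a b then Theta c r else 0)"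
      by (rule sum.cong) (auto simp: delta_def)
    also have "\<dots> = Theta (fprod a b) r" using fC \<open>fprod a b \<in> C\<close> by (simp add: sum.delta')
    finally have "(\<Sum>c\<in>C. delta (fprod a b) c * (Theta c r :: 'k)) = Theta (fprod a b) r" .
    thus "(\<Sum>c\<in>C. u a * v b * (delta (fprod a b) c * Theta c r)) = u a * v b * (Theta (fprod a b) r :: 'k)"
      by (simp add: sum_distrib_left[symmetric])
  qed
  finally have L: "Theta_lin (mult_H u v :: nat list \<Rightarrow> 'k) r = (\<Sum>a\<in>A. \<Sum>b\<in>B. u a * v b * Theta (fprod a b) r)" .
  have su: "vsupp (Theta_lin u :: nat list \<Rightarrow> 'k) \<subseteq> Q" "vsupp (Theta_lin v :: nat list \<Rightarrow> 'k) \<subseteq> Q"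
    using Theta_lin_vsupp[of u N] Theta_lin_vsupp[of v N] fA fB N A_def B_def Q_def by auto
  have tu: "(Theta_lin u :: nat list \<Rightarrow> 'k) s = (\<Sum>a\<in>A. u a * Theta a s)" for s
    by (rule Theta_lin_eq[OF fA]) (simp add: A_def)
  have tv: "(Theta_lin v :: nat list \<Rightarrow> 'k) t = (\<Sum>b\<in>B. v b * Theta b t)" for t
    by (rule Theta_lin_eq[OF fB]) (simp add: B_def)
  have "mult_FQ (Theta_lin u) (Theta_lin v) r =
        (\<Sum>s\<in>Q. \<Sum>t\<in>Q. (Theta_lin u :: nat list \<Rightarrow> 'k) s * Theta_lin v t * pprod s t r)"
    unfolding mult_FQ_def by (rule bext_eq[OF fQ su(1) fQ su(2)])
  also have "\<dots> = (\<Sum>s\<in>Q. \<Sum>t\<in>Q. (\<Sum>a\<in>A. u a * Theta a s) * (\<Sum>b\<in>B. v b * Theta b t) * pprod s t r)"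
    by (simp add: tu tv)
  also have "\<dots> = (\<Sum>a\<in>A. \<Sum>b\<in>B. \<Sum>s\<in>Q. \<Sum>t\<in>Q. (u a * Theta a s) * (v b * Theta b t) * pprod s t r)"
    by (rule quad_swap)
  also have "\<dots> = (\<Sum>a\<in>A. \<Sum>b\<in>B. u a * v b * Theta (fprod a b) r)"
  proof (rule sum.cong[OF refl], rule sum.cong[OF refl])
    fix a b assume ab: "a \<in> A" "b \<in> B"
    have sa: "S_F a \<subseteq> Q" "S_F b \<subseteq> Q" using S_F_sub2 N ab Q_def by auto
    have "(\<Sum>s\<in>Q. \<Sum>t\<in>Q. (u a * Theta a s) * (v b * Theta b t) * (pprod s t r :: 'k)) =
          u a * v b * (\<Sum>s\<in>Q. Theta a s * (\<Sum>t\<in>Q. Theta b t * pprod s t r))"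
      by (simp add: sum_distrib_left mult_ac)
    also have "\<dots> = u a * v b * (\<Sum>s\<in>S_F a. \<Sum>t\<in>S_F b. pprod s t r)"
      by (simp add: theta_sum[OF fQ sa(1)] theta_sum[OF fQ sa(2)])
    also have "\<dots> = u a * v b * Theta (fprod a b) r"
      using Theta_fprod ab AH BH by (metis subsetD)
    finally show "(\<Sum>s\<in>Q. \<Sum>t\<in>Q. (u a * Theta a s) * (v b * Theta b t) * (pprod s t r :: 'k)) =
          u a * v b * Theta (fprod a b) r" .
  qed
  finally show "Theta_lin (mult_H u v :: nat list \<Rightarrow> 'k) r = mult_FQ (Theta_lin u) (Theta_lin v) r"
    using L by simp
qed




definition rk :: "nat set \<Rightarrow> nat \<Rightarrow> nat" where
  "rk S x = card {y\<in>S. y \<le> x}"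

definition unstd :: "nat set \<Rightarrow> nat list \<Rightarrow> nat list" where
  "unstd S c = map (\<lambda>i. sorted_list_of_set S ! (i - 1)) c"

lemma std_rk: "std w = map (rk (set w)) w"
  unfolding std_def rk_def by simp

lemma rk_nth:
  assumes fS: "finite S" and j: "j < card S"
  shows "rk S (sorted_list_of_set S ! j) = Suc j"
proof -
  let ?L = "sorted_list_of_set S"
  have dL: "distinct ?L" and sL: "set ?L = S" and lL: "length ?L = card S" using fS by auto
  have ssL: "sorted_wrt (<) ?L" using fS strict_sorted_iff by auto
  have lt: "q < length ?L \<Longrightarrow> p < length ?L \<Longrightarrow> p < q \<Longrightarrow> ?L!p < ?L!q" for p q
    using ssL sorted_wrt_iff_nth_less by blast
  have "{y\<in>S. y \<le> ?L!j} = (\<lambda>q. ?L!q) ` {0..j}"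
  proof
    show "{y\<in>S. y \<le> ?L!j} \<subseteq> (\<lambda>q. ?L!q) ` {0..j}"
    proof
      fix y assume y: "y \<in> {y\<in>S. y \<le> ?L!j}"
      then obtain q where q: "q < length ?L" "y = ?L!q" using sL by (metis (no_types, lifting) in_set_conv_nth mem_Collect_eq)
      have "q \<le> j"
      proof (rule ccontr)
        assume "\<not> q \<le> j" hence "?L!j < ?L!q" using lt q j lL by simp
        thus False using y q by simp
      qed
      thus "y \<in> (\<lambda>q. ?L!q) ` {0..j}" using q by auto
    qed
  next
    show "(\<lambda>q. ?L!q) ` {0..j} \<subseteq> {y\<in>S. y \<le> ?L!j}"
    proof
      fix y assume "y \<in> (\<lambda>q. ?L!q) ` {0..j}"
      then obtain q where q: "q \<le> j" "y = ?L!q" by auto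
      have "?L!q \<in> S" using q j lL sL nth_mem by (metis le_less_trans)
      moreover have "?L!q \<le> ?L!j" using q lt j lL by (cases "q = j") (auto intro: less_imp_le)
      ultimately show "y \<in> {y\<in>S. y \<le> ?L!j}" using q by simp
    qed
  qed
  moreover have "inj_on (\<lambda>q. ?L!q) {0..j}"
    using dL j lL by (auto simp: inj_on_def nth_eq_iff_index_eq)
  ultimately show ?thesis unfolding rk_def by (simp add: card_image)
qed

lemma rk_inS:
  assumes "finite S" "x \<in> S"
  shows "rk S x \<in> {1..card S} \<and> sorted_list_of_set S ! (rk S x - 1) = x"
proof -
  have "x \<in> set (sorted_list_of_set S)" using assms by simp
  then obtain j where "j < length (sorted_list_of_set S)" "x = sorted_list_of_set S ! j"
    by (metis in_set_conv_nth)
  hence "j < card S" "x = sorted_list_of_set S ! j" by simp_all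
  thus ?thesis using rk_nth[OF assms(1)] by simp
qed

lemma nth_sl_in:
  assumes "finite S" "i \<in> {1..card S}"
  shows "sorted_list_of_set S ! (i-1) \<in> S \<and> rk S (sorted_list_of_set S ! (i-1)) = i"
proof -
  have "i - 1 < card S" using assms by auto
  hence "sorted_list_of_set S ! (i-1) \<in> set (sorted_list_of_set S)" using assms(1) by (intro nth_mem) simp
  thus ?thesis using rk_nth[OF assms(1) \<open>i - 1 < card S\<close>] assms by simp
qed

lemma std_perm:
  assumes d: "distinct w"
  shows "perm_list (std w) \<and> length (std w) = length w"
proof -
  let ?S = "set w"
  have cS: "card ?S = length w" using d distinct_card by blast
  have inj: "inj_on (rk ?S) ?S"
    by (rule inj_onI) (metis rk_inS finite_set)
  have "distinct (std w)" using d inj by (simp add: std_rk distinct_map)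
  moreover have "set (std w) \<subseteq> {1..length (std w)}" using rk_inS[of ?S] cS by (auto simp: std_rk)
  ultimately show ?thesis using perm_list_iff2 by (simp add: std_rk)
qed

lemma unstd_std:
  assumes "distinct w"
  shows "unstd (set w) (std w) = w"
proof -
  have "map (\<lambda>i. sorted_list_of_set (set w) ! (i - 1)) (map (rk (set w)) w) =
        map (\<lambda>x. sorted_list_of_set (set w) ! (rk (set w) x - 1)) w" by simp
  also have "\<dots> = w" by (rule map_idI) (use rk_inS[of "set w"] in simp)
  finally show ?thesis unfolding unstd_def std_rk .
qed

lemma unstd_props:
  assumes fS: "finite S" and pc: "perm_list c" and lc: "length c = card S"
  shows "distinct (unstd S c) \<and> set (unstd S c) = S \<and> std (unstd S c) = c \<and> length (unstd S c) = card S"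
proof -
  define e where "e i = sorted_list_of_set S ! (i - 1)" for i
  have sc: "set c = {1..card S}" using pc lc unfolding perm_list_def by simp
  have dc: "distinct c" using pc unfolding perm_list_def by simp
  have ei: "i \<in> {1..card S} \<Longrightarrow> e i \<in> S \<and> rk S (e i) = i" for i using nth_sl_in[OF fS] e_def by simp
  have inj: "inj_on e (set c)" by (rule inj_onI) (metis ei sc)
  have u: "unstd S c = map e c" unfolding unstd_def e_def by simp
  have d: "distinct (unstd S c)" using u inj dc by (simp add: distinct_map)
  have s: "set (unstd S c) = S"
  proof
    show "set (unstd S c) \<subseteq> S" using u ei sc by auto
    show "S \<subseteq> set (unstd S c)"
    proof
      fix x assume x: "x \<in> S"
      hence "rk S x \<in> set c" "e (rk S x) = x" using rk_inS[OF fS x] sc e_def by auto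
      thus "x \<in> set (unstd S c)" using u by (metis image_eqI set_map)
    qed
  qed
  have "std (unstd S c) = map (rk S) (map e c)" using std_rk s u by metis
  also have "\<dots> = c" by (simp, rule map_idI) (use ei sc in simp)
  finally show ?thesis using d s u lc by simp
qed

lemma S_F_restrict:
  assumes fS: "finite S"
  shows "c \<in> S_F (restrict_forest F S) \<longleftrightarrow> perm_list c \<and> length c = card S \<and>
           (\<forall>v\<in>S. F!(v-1) \<in> S \<longrightarrow> before (unstd S c) (F!(v-1)) v)"
proof -
  define RF where "RF = restrict_forest F S"
  define e where "e i = sorted_list_of_set S ! (i - 1)" for i
  define m where "m = card S"
  have lRF: "length RF = m" unfolding RF_def restrict_forest_def m_def using fS by simp
  have RFi: "RF!(i-1) = (if F!(e i - 1) \<in> S then rk S (F!(e i - 1)) else 0)" if "i \<in> {1..m}" for i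
  proof -
    have "i - 1 < length (sorted_list_of_set S)" using that m_def fS by auto
    thus ?thesis unfolding RF_def restrict_forest_def e_def rk_def Let_def by simp
  qed
  have ei: "i \<in> {1..m} \<Longrightarrow> e i \<in> S \<and> rk S (e i) = i" for i using nth_sl_in[OF fS] e_def m_def by simp
  have bound: "\<forall>k < length RF. RF ! k \<le> length RF"
  proof (intro allI impI)
    fix k assume "k < length RF"
    hence "Suc k \<in> {1..m}" using lRF by auto
    thus "RF ! k \<le> length RF" using RFi[of "Suc k"] rk_inS[OF fS] lRF m_def by (auto split: if_splits)
  qed
  show ?thesis
  proof (cases "perm_list c \<and> length c = m")
    case False thus ?thesis using lRF m_def unfolding RF_def[symmetric] S_F_def by auto
  next
    case True
    have sc: "set c = {1..m}" using True unfolding perm_list_def by auto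
    have inj: "inj_on e (set c)" by (rule inj_onI) (metis ei sc)
    have u: "unstd S c = map e c" unfolding unstd_def e_def by simp
    have "(\<forall>i. 1 \<le> i \<and> i \<le> m \<and> RF!(i-1) \<noteq> 0 \<longrightarrow> before c (RF!(i-1)) i) \<longleftrightarrow>
          (\<forall>i\<in>{1..m}. F!(e i - 1) \<in> S \<longrightarrow> before (unstd S c) (F!(e i - 1)) (e i))"
    proof -
      have "(1 \<le> i \<and> i \<le> m \<and> RF!(i-1) \<noteq> 0 \<longrightarrow> before c (RF!(i-1)) i) \<longleftrightarrow>
            (i\<in>{1..m} \<longrightarrow> F!(e i - 1) \<in> S \<longrightarrow> before (unstd S c) (F!(e i - 1)) (e i))" for i
      proof (cases "i \<in> {1..m} \<and> F!(e i - 1) \<in> S")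
        case True
        define p where "p = F!(e i - 1)"
        have rp: "rk S p \<in> {1..m}" "e (rk S p) = p" using rk_inS[OF fS] True p_def e_def m_def by auto
        have "RF!(i-1) = rk S p" using RFi True p_def by simp
        moreover have "before c (rk S p) i \<longleftrightarrow> before (map e c) (e (rk S p)) (e i)"
          using before_map[of c "rk S p" i e] before_map_inj[OF inj] rp True sc by blast
        ultimately show ?thesis using rp True p_def u by auto
      next
        case False
        thus ?thesis using RFi by auto
      qed
      thus ?thesis by auto
    qed
    also have "\<dots> \<longleftrightarrow> (\<forall>v\<in>S. F!(v-1) \<in> S \<longrightarrow> before (unstd S c) (F!(v-1)) v)"
    proof
      assume h: "\<forall>i\<in>{1..m}. F!(e i - 1) \<in> S \<longrightarrow> before (unstd S c) (F!(e i - 1)) (e i)"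
      show "\<forall>v\<in>S. F!(v-1) \<in> S \<longrightarrow> before (unstd S c) (F!(v-1)) v"
      proof (intro ballI impI)
        fix v assume v: "v \<in> S" "F!(v-1) \<in> S"
        have "rk S v \<in> {1..m}" "e (rk S v) = v" using rk_inS[OF fS v(1)] e_def m_def by auto
        thus "before (unstd S c) (F!(v-1)) v" using h v by metis
      qed
    next
      assume "\<forall>v\<in>S. F!(v-1) \<in> S \<longrightarrow> before (unstd S c) (F!(v-1)) v"
      thus "\<forall>i\<in>{1..m}. F!(e i - 1) \<in> S \<longrightarrow> before (unstd S c) (F!(e i - 1)) (e i)" using ei by blast
    qed
    finally show ?thesis using S_F_before[OF bound] True lRF unfolding RF_def m_def by simp
  qed
qed




definition vsp :: "nat list \<Rightarrow> nat list \<Rightarrow> nat \<Rightarrow> nat set" where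
  "vsp F s k = {v \<in> set (drop k s). F!(v-1) \<notin> set (drop k s)}"

context
  fixes F :: "nat list"
  assumes HO: "F \<in> HO"
begin

lemma ho_par: "v \<in> {1..length F} \<Longrightarrow> F!(v-1) < v"
  using HO HO_iff by (metis One_nat_def Suc_pred atLeastAtMost_iff diff_less le_imp_less_Suc less_le_trans not_one_le_zero not_less_eq_eq zero_less_iff_neq_zero)

lemma ho_par_range: "v \<in> {1..length F} \<Longrightarrow> F!(v-1) \<noteq> 0 \<Longrightarrow> F!(v-1) \<in> {1..length F}"
  using ho_par by fastforce

lemma reach_edge: "v \<in> {1..length F} \<Longrightarrow> F!(v-1) \<noteq> 0 \<Longrightarrow> (v, F!(v-1)) \<in> reach F"
  using fedges_reach fedges_iff by auto

lemma reach_step: "(v, w) \<in> reach F \<Longrightarrow> v \<in> {1..length F} \<and> F!(v-1) \<noteq> 0 \<and> (w = F!(v-1) \<or> (F!(v-1), w) \<in> reach F)"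
  unfolding reach_def
proof (induction rule: converse_trancl_induct)
  case (base y) thus ?case by (auto simp: fedges_iff)
next
  case (step y z) thus ?case unfolding reach_def[symmetric] by (auto simp: fedges_iff reach_def)
qed

lemma reach_trans: "(a, b) \<in> reach F \<Longrightarrow> (b, c) \<in> reach F \<Longrightarrow> (a, c) \<in> reach F"
  unfolding reach_def by (rule trancl_trans)

lemma reach_rng: "(a, b) \<in> reach F \<Longrightarrow> a \<in> {1..length F} \<and> b \<in> {1..length F}"
  using reach_range HO_bound[OF HO] by blast

section \<open>Cuts\<close>

context
  fixes vs assumes cut: "admissible_cut F vs"
begin

lemma cut_vs: "vs \<subseteq> {1..length F}" and cut_anti: "v \<in> vs \<Longrightarrow> w \<in> vs \<Longrightarrow> (v, w) \<notin> reach F"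
  using cut unfolding admissible_cut_def by auto

lemma lea_sub: "lea_set F vs \<subseteq> {1..length F}"
  unfolding lea_set_def using cut_vs reach_rng by auto

lemma lea_child: "v \<in> {1..length F} \<Longrightarrow> F!(v-1) \<in> lea_set F vs \<Longrightarrow> v \<in> lea_set F vs"
proof -
  assume v: "v \<in> {1..length F}" and p: "F!(v-1) \<in> lea_set F vs"
  have "F!(v-1) \<noteq> 0" using p lea_sub by fastforce
  hence e: "(v, F!(v-1)) \<in> reach F" using reach_edge v by blast
  show ?thesis
  proof (cases "F!(v-1) \<in> vs")
    case True thus ?thesis using e unfolding lea_set_def by blast
  next
    case False
    then obtain w where "w \<in> vs" "(F!(v-1), w) \<in> reach F" using p unfolding lea_set_def by blast
    thus ?thesis using e reach_trans unfolding lea_set_def by blast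
  qed
qed

lemma lea_min: "{v \<in> lea_set F vs. F!(v-1) \<notin> lea_set F vs} = vs"
proof
  show "{v \<in> lea_set F vs. F!(v-1) \<notin> lea_set F vs} \<subseteq> vs"
  proof
    fix v assume v: "v \<in> {v \<in> lea_set F vs. F!(v-1) \<notin> lea_set F vs}"
    show "v \<in> vs"
    proof (rule ccontr)
      assume "v \<notin> vs"
      then obtain w where w: "w \<in> vs" "(v, w) \<in> reach F" using v unfolding lea_set_def by blast
      from reach_step[OF w(2)] have "w = F!(v-1) \<or> (F!(v-1), w) \<in> reach F" by blast
      hence "F!(v-1) \<in> lea_set F vs" using w unfolding lea_set_def by blast
      thus False using v by blast
    qed
  qed
next
  show "vs \<subseteq> {v \<in> lea_set F vs. F!(v-1) \<notin> lea_set F vs}"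
  proof
    fix v assume v: "v \<in> vs"
    have "F!(v-1) \<notin> lea_set F vs"
    proof
      assume p: "F!(v-1) \<in> lea_set F vs"
      have "v \<in> {1..length F}" using v cut_vs by blast
      moreover have "F!(v-1) \<noteq> 0" using p lea_sub by fastforce
      ultimately have e: "(v, F!(v-1)) \<in> reach F" using reach_edge by blast
      show False
      proof (cases "F!(v-1) \<in> vs")
        case True thus False using e v cut_anti by blast
      next
        case False
        then obtain w where "w \<in> vs" "(F!(v-1), w) \<in> reach F" using p unfolding lea_set_def by blast
        thus False using e v cut_anti reach_trans by blast
      qed
    qed
    thus "v \<in> {v \<in> lea_set F vs. F!(v-1) \<notin> lea_set F vs}" using v unfolding lea_set_def by blast
  qed
qed

lemma roo_par: "v \<in> roo_set F vs \<Longrightarrow> F!(v-1) \<noteq> 0 \<Longrightarrow> F!(v-1) \<in> roo_set F vs"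
  unfolding roo_set_def using lea_child ho_par_range by blast

end

context
  fixes s k assumes sS: "s \<in> S_F F" and kn: "k \<le> length F"
begin

lemma s_perm: "set s = {1..length F}" "distinct s" "length s = length F"
  using sS unfolding S_F_def perm_list_def by auto

lemma td_disj: "set (take k s) \<inter> set (drop k s) = {}"
  using s_perm(2) by (metis append_take_drop_id disjoint_iff distinct_append)

lemma td_union: "set (take k s) \<union> set (drop k s) = {1..length F}"
  using s_perm(1) by (metis append_take_drop_id set_append)

lemma s_edge: "v \<in> {1..length F} \<Longrightarrow> F!(v-1) \<noteq> 0 \<Longrightarrow> before s (F!(v-1)) v"
  using sS S_F_before[OF HO_bound[OF HO]] by auto

lemma s_reach: "(x, y) \<in> reach F \<Longrightarrow> before s y x"
  using S_F_reach_before[OF sS _ HO_bound[OF HO]] by blast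

lemma take_closed: "before s x y \<Longrightarrow> y \<in> set (take k s) \<Longrightarrow> x \<in> set (take k s)"
proof (rule ccontr)
  assume b: "before s x y" "y \<in> set (take k s)" "x \<notin> set (take k s)"
  have "x \<in> set s" using b before_set by blast
  hence "x \<in> set (drop k s)" using b td_union s_perm by blast
  hence "y \<in> set (drop k s)" using before_drop_closed s_perm b by blast
  thus False using b td_disj by blast
qed


lemma drop_sub: "set (drop k s) \<subseteq> {1..length F}" using td_union by blast

lemma vsp_cut: "admissible_cut F (vsp F s k)"
  unfolding admissible_cut_def
proof (intro conjI ballI)
  show "vsp F s k \<subseteq> {1..length F}" unfolding vsp_def using drop_sub by blast
next
  fix v w assume vw: "v \<in> vsp F s k" "w \<in> vsp F s k"
  show "(v, w) \<notin> reach F"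
  proof
    assume r: "(v, w) \<in> reach F"
    from reach_step[OF r] have st: "F!(v-1) \<noteq> 0" "w = F!(v-1) \<or> (F!(v-1), w) \<in> reach F" by auto
    have pv: "F!(v-1) \<notin> set (drop k s)" using vw vsp_def by blast
    show False
    proof (cases "w = F!(v-1)")
      case True thus False using pv vw vsp_def by blast
    next
      case False
      hence r2: "(F!(v-1), w) \<in> reach F" using st by blast
      have "F!(v-1) \<in> {1..length F}" using reach_rng r2 by blast
      hence "F!(v-1) \<in> set (take k s)" using pv td_union by blast
      moreover have "before s w (F!(v-1))" using s_reach r2 by blast
      ultimately have "w \<in> set (take k s)" using take_closed by blast
      thus False using vw vsp_def td_disj by blast
    qed
  qed
qed

lemma vsp_lea: "lea_set F (vsp F s k) = set (drop k s)"
proof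
  show "lea_set F (vsp F s k) \<subseteq> set (drop k s)"
  proof
    fix w assume "w \<in> lea_set F (vsp F s k)"
    hence "w \<in> vsp F s k \<or> (\<exists>v\<in>vsp F s k. (w, v) \<in> reach F)" unfolding lea_set_def by blast
    thus "w \<in> set (drop k s)"
    proof
      assume "\<exists>v\<in>vsp F s k. (w, v) \<in> reach F"
      then obtain v where "v \<in> vsp F s k" "(w, v) \<in> reach F" by blast
      thus ?thesis using s_reach before_drop_closed s_perm vsp_def by blast
    qed (simp add: vsp_def)
  qed
next
  have "\<forall>v. v \<in> set (drop k s) \<longrightarrow> v \<in> vsp F s k \<or> (\<exists>w\<in>vsp F s k. (v, w) \<in> reach F)"
  proof (intro allI)
    fix v show "v \<in> set (drop k s) \<longrightarrow> v \<in> vsp F s k \<or> (\<exists>w\<in>vsp F s k. (v, w) \<in> reach F)"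
    proof (induction v rule: less_induct)
      case (less v)
      show ?case
      proof
        assume v: "v \<in> set (drop k s)"
        show "v \<in> vsp F s k \<or> (\<exists>w\<in>vsp F s k. (v, w) \<in> reach F)"
        proof (cases "F!(v-1) \<in> set (drop k s)")
          case False thus ?thesis using v vsp_def by blast
        next
          case True
          have vr: "v \<in> {1..length F}" using v drop_sub by blast
          have "F!(v-1) \<noteq> 0" using True drop_sub by fastforce
          hence e: "(v, F!(v-1)) \<in> reach F" using reach_edge vr by blast
          have "F!(v-1) < v" using ho_par vr by blast
          hence "F!(v-1) \<in> vsp F s k \<or> (\<exists>w\<in>vsp F s k. (F!(v-1), w) \<in> reach F)" using less True by blast
          thus ?thesis using e reach_trans by blast
        qed
      qed
    qed
  qed
  thus "set (drop k s) \<subseteq> lea_set F (vsp F s k)" unfolding lea_set_def by blast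
qed

lemma vsp_roo: "roo_set F (vsp F s k) = set (take k s)"
  unfolding roo_set_def vsp_lea using td_disj td_union by blast

end

end



lemma coprod_card:
  assumes HO: "F \<in> HO"
  shows "card {vs. admissible_cut F vs \<and> c \<in> S_F (restrict_forest F (roo_set F vs)) \<and>
                   d \<in> S_F (restrict_forest F (lea_set F vs))} =
         card (SIGMA s:S_F F. {k. k \<le> length s \<and> std (take k s) = c \<and> std (drop k s) = d})"
proof -
  define n where "n = length F"
  define V where "V = {vs. admissible_cut F vs \<and> c \<in> S_F (restrict_forest F (roo_set F vs)) \<and>
                   d \<in> S_F (restrict_forest F (lea_set F vs))}"
  define P where "P = (SIGMA s:S_F F. {k. k \<le> length s \<and> std (take k s) = c \<and> std (drop k s) = d})"
  define g where "g vs = (unstd (roo_set F vs) c @ unstd (lea_set F vs) d, card (roo_set F vs))" for vs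
  define f where "f sk = {v \<in> set (drop (snd sk) (fst sk)). F!(v-1) \<notin> set (drop (snd sk) (fst sk))}" for sk :: "nat list \<times> nat"
  have Vfacts: "admissible_cut F vs \<and> finite (roo_set F vs) \<and> finite (lea_set F vs) \<and>
       roo_set F vs \<inter> lea_set F vs = {} \<and> roo_set F vs \<union> lea_set F vs = {1..n} \<and>
       distinct (unstd (roo_set F vs) c) \<and> set (unstd (roo_set F vs) c) = roo_set F vs \<and>
       std (unstd (roo_set F vs) c) = c \<and> length (unstd (roo_set F vs) c) = card (roo_set F vs) \<and>
       distinct (unstd (lea_set F vs) d) \<and> set (unstd (lea_set F vs) d) = lea_set F vs \<and>
       std (unstd (lea_set F vs) d) = d \<and>
       (\<forall>v\<in>roo_set F vs. F!(v-1) \<in> roo_set F vs \<longrightarrow> before (unstd (roo_set F vs) c) (F!(v-1)) v) \<and>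
       (\<forall>v\<in>lea_set F vs. F!(v-1) \<in> lea_set F vs \<longrightarrow> before (unstd (lea_set F vs) d) (F!(v-1)) v)"
    if vs: "vs \<in> V" for vs
  proof -
    have cut: "admissible_cut F vs" using vs V_def by blast
    have ls: "lea_set F vs \<subseteq> {1..n}" using lea_sub[OF HO cut] n_def by blast
    have fR: "finite (roo_set F vs)" unfolding roo_set_def by simp
    have fL: "finite (lea_set F vs)" using ls finite_subset by blast
    have cR: "perm_list c \<and> length c = card (roo_set F vs) \<and>
       (\<forall>v\<in>roo_set F vs. F!(v-1) \<in> roo_set F vs \<longrightarrow> before (unstd (roo_set F vs) c) (F!(v-1)) v)"
      using vs V_def S_F_restrict[OF fR] by blast
    have cL: "perm_list d \<and> length d = card (lea_set F vs) \<and>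
       (\<forall>v\<in>lea_set F vs. F!(v-1) \<in> lea_set F vs \<longrightarrow> before (unstd (lea_set F vs) d) (F!(v-1)) v)"
      using vs V_def S_F_restrict[OF fL] by blast
    show ?thesis using cut fR fL cR cL unstd_props[OF fR, of c] unstd_props[OF fL, of d] ls
      unfolding roo_set_def n_def by auto
  qed
  have "bij_betw g V P"
  proof (rule bij_betw_byWitness[where f'=f])
    show "\<forall>a\<in>V. f (g a) = a"
    proof
      fix vs assume vs: "vs \<in> V"
      note X = Vfacts[OF vs]
      have "drop (card (roo_set F vs)) (unstd (roo_set F vs) c @ unstd (lea_set F vs) d) = unstd (lea_set F vs) d"
        using X by simp
      hence "f (g vs) = {v \<in> lea_set F vs. F!(v-1) \<notin> lea_set F vs}" unfolding f_def g_def using X by simp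
      thus "f (g vs) = vs" using lea_min[OF HO] X by simp
    qed
  next
    show "\<forall>b\<in>P. g (f b) = b"
    proof
      fix b assume b: "b \<in> P"
      obtain s k where sk: "b = (s, k)" by fastforce
      have sS: "s \<in> S_F F" and k: "k \<le> length F" and cs: "std (take k s) = c" and ds: "std (drop k s) = d"
        using b sk P_def S_F_def by auto
      have fb: "f b = vsp F s k" unfolding f_def vsp_def sk by simp
      have dist: "distinct s" using s_perm[OF HO sS k] by simp
      have "g (f b) = (unstd (set (take k s)) c @ unstd (set (drop k s)) d, card (set (take k s)))"
        unfolding g_def fb vsp_roo[OF HO sS k] vsp_lea[OF HO sS k] by simp
      also have "\<dots> = (take k s @ drop k s, k)"
        using unstd_std[of "take k s"] unstd_std[of "drop k s"] dist cs ds distinct_card[of "take k s"] k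
          s_perm[OF HO sS k] by simp
      finally show "g (f b) = b" using sk by simp
    qed
  next
    show "g ` V \<subseteq> P"
    proof
      fix x assume "x \<in> g ` V"
      then obtain vs where vs: "vs \<in> V" "x = g vs" by blast
      note X = Vfacts[OF vs(1)]
      define R where "R = roo_set F vs"
      define L where "L = lea_set F vs"
      define u where "u = unstd R c"
      define w where "w = unstd L d"
      have cut: "admissible_cut F vs" using X by blast
      have ds: "distinct (u @ w)" using X R_def L_def u_def w_def by auto
      have ss: "set (u @ w) = {1..n}" using X R_def L_def u_def w_def by auto
      have ls: "length (u @ w) = n" using distinct_card[OF ds] ss by simp
      have ps: "perm_list (u @ w)" using ds ss ls unfolding perm_list_def by simp
      have edges: "before (u @ w) (F!(i-1)) i" if i: "1 \<le> i" "i \<le> n" "F!(i-1) \<noteq> 0" for i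
      proof -
        have ir: "i \<in> {1..length F}" using i n_def by simp
        have pr: "F!(i-1) \<in> {1..n}" using ho_par_range[OF HO ir] i n_def by simp
        show ?thesis
        proof (cases "i \<in> R")
          case True
          hence "F!(i-1) \<in> R" using roo_par[OF HO cut] i R_def by blast
          hence "before u (F!(i-1)) i" using X True R_def u_def by blast
          thus ?thesis by (rule before_appI1)
        next
          case False
          hence iL: "i \<in> L" using X ir R_def L_def n_def by blast
          show ?thesis
          proof (cases "F!(i-1) \<in> L")
            case True
            hence "before w (F!(i-1)) i" using X iL L_def w_def by blast
            thus ?thesis by (rule before_appI2)
          next
            case False
            hence "F!(i-1) \<in> set u" using X pr R_def L_def u_def by blast
            moreover have "i \<in> set w" using X iL L_def w_def by blast
            ultimately show ?thesis by (rule before_appI3)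
          qed
        qed
      qed
      have sS: "u @ w \<in> S_F F" using S_F_before[OF HO_bound[OF HO]] ps ls edges n_def by auto
      have lu: "length u = card R" using X R_def u_def by blast
      have "take (card R) (u @ w) = u" "drop (card R) (u @ w) = w" using lu by auto
      moreover have "std u = c" "std w = d" using X R_def L_def u_def w_def by auto
      moreover have "card R \<le> length (u @ w)" using lu by simp
      ultimately have "(u @ w, card R) \<in> P" unfolding P_def using sS by simp
      thus "x \<in> P" using vs(2) g_def R_def L_def u_def w_def by simp
    qed
  next
    show "f ` P \<subseteq> V"
    proof
      fix x assume "x \<in> f ` P"
      then obtain bb where bb: "bb \<in> P" "x = f bb" by blast
      obtain s k where "bb = (s, k)" by fastforce
      hence b: "(s, k) \<in> P" "x = f (s, k)" using bb by auto
      have sS: "s \<in> S_F F" and k: "k \<le> length F" and cs: "std (take k s) = c" and ds: "std (drop k s) = d"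
        using b P_def S_F_def by auto
      have fb: "x = vsp F s k" unfolding b f_def vsp_def by simp
      have sp: "set s = {1..length F}" "distinct s" "length s = length F" using s_perm[OF HO sS k] by auto
      have cut: "admissible_cut F x" using vsp_cut[OF HO sS k] fb by simp
      have roo: "roo_set F x = set (take k s)" and lea: "lea_set F x = set (drop k s)"
        using vsp_roo[OF HO sS k] vsp_lea[OF HO sS k] fb by auto
      have dt: "distinct (take k s)" "distinct (drop k s)" using sp by auto
      have ed: "before s (F!(v-1)) v" if "v \<in> set s" "F!(v-1) \<in> set s" for v
        using s_edge[OF HO sS k] that sp by fastforce
      have s_split: "distinct (take k s @ drop k s)" using sp by simp
      have C1: "c \<in> S_F (restrict_forest F (roo_set F x))"
        unfolding roo S_F_restrict[OF finite_set]
      proof (intro conjI)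
        show "perm_list c" using std_perm[OF dt(1)] cs by simp
        show "length c = card (set (take k s))" using std_perm[OF dt(1)] cs distinct_card[OF dt(1)] by simp
        show "\<forall>v\<in>set (take k s). F!(v-1) \<in> set (take k s) \<longrightarrow> before (unstd (set (take k s)) c) (F!(v-1)) v"
        proof (intro ballI impI)
          fix v assume v: "v \<in> set (take k s)" "F!(v-1) \<in> set (take k s)"
          have "before s (F!(v-1)) v" using ed v by (meson in_set_takeD)
          hence "before (take k s @ drop k s) (F!(v-1)) v" by simp
          hence "before (take k s) (F!(v-1)) v" using before_sub s_split v by blast
          thus "before (unstd (set (take k s)) c) (F!(v-1)) v" using unstd_std[OF dt(1)] cs by simp
        qed
      qed
      have C2: "d \<in> S_F (restrict_forest F (lea_set F x))"
        unfolding lea S_F_restrict[OF finite_set]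
      proof (intro conjI)
        show "perm_list d" using std_perm[OF dt(2)] ds by simp
        show "length d = card (set (drop k s))" using std_perm[OF dt(2)] ds distinct_card[OF dt(2)] by simp
        show "\<forall>v\<in>set (drop k s). F!(v-1) \<in> set (drop k s) \<longrightarrow> before (unstd (set (drop k s)) d) (F!(v-1)) v"
        proof (intro ballI impI)
          fix v assume v: "v \<in> set (drop k s)" "F!(v-1) \<in> set (drop k s)"
          have "before s (F!(v-1)) v" using ed v by (meson in_set_dropD)
          hence "before (take k s @ drop k s) (F!(v-1)) v" by simp
          hence "before (drop k s) (F!(v-1)) v" using before_sub2 s_split v by blast
          thus "before (unstd (set (drop k s)) d) (F!(v-1)) v" using unstd_std[OF dt(2)] ds by simp
        qed
      qed
      show "x \<in> V" unfolding V_def using cut C1 C2 by simp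
    qed
  qed
  thus ?thesis unfolding V_def P_def by (rule bij_betw_same_card)
qed




lemma fiber_sum:
  assumes fV: "finite V" and fX: "finite X" and hV: "h ` V \<subseteq> X"
  shows "(\<Sum>y\<in>X. of_nat (card {v\<in>V. h v = y}) * (T y :: 'k::comm_ring_1)) = (\<Sum>v\<in>V. T (h v))"
proof -
  have "(\<Sum>y\<in>X. of_nat (card {v\<in>V. h v = y}) * (T y :: 'k)) = (\<Sum>y\<in>X. \<Sum>v\<in>{v\<in>V. h v = y}. T (h v))"
  proof (rule sum.cong[OF refl])
    fix y
    have "(\<Sum>v\<in>{v\<in>V. h v = y}. T (h v)) = (\<Sum>v\<in>{v\<in>V. h v = y}. T y)" by (rule sum.cong) auto
    also have "\<dots> = of_nat (card {v\<in>V. h v = y}) * T y" by (rule sum_constant)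
    finally show "of_nat (card {v\<in>V. h v = y}) * T y = (\<Sum>v\<in>{v\<in>V. h v = y}. T (h v))" by simp
  qed
  also have "\<dots> = (\<Sum>v\<in>V. T (h v))" by (rule sum.group[OF fV fX hV])
  finally show ?thesis .
qed

lemma sum_indicator: "finite A \<Longrightarrow> (\<Sum>x\<in>A. if P x then 1 else 0) = (of_nat (card {x\<in>A. P x}) :: 'k::comm_ring_1)"
  by (simp add: sum.inter_filter[symmetric])

lemma finite_cuts: "finite {vs. admissible_cut F vs}"
proof -
  have "{vs. admissible_cut F vs} \<subseteq> Pow {1..length F}" unfolding admissible_cut_def by auto
  thus ?thesis using finite_subset by blast
qed

definition cpr :: "nat list \<Rightarrow> nat set \<Rightarrow> nat list \<times> nat list" where
  "cpr F vs = (restrict_forest F (roo_set F vs), restrict_forest F (lea_set F vs))"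

lemma Delta_H_eq: "(Delta_H F y :: 'k::comm_ring_1) = of_nat (card {vs\<in>{vs. admissible_cut F vs}. cpr F vs = y})"
  unfolding Delta_H_def cpr_def by simp

lemma coproduct_part:
  assumes u: "u \<in> fvecs HO"
  shows "lext (tens Theta Theta) (comult_H u :: nat list \<times> nat list \<Rightarrow> 'k::comm_ring_1) = comult_FQ (Theta_lin u)"
proof
  fix x :: "nat list \<times> nat list"
  obtain c d where x: "x = (c, d)" by fastforce
  define A where "A = vsupp u"
  have fA: "finite A" using u fvecs_finite A_def by blast
  have AH: "A \<subseteq> HO" using u fvecs_sub A_def by blast
  obtain N where N: "\<forall>F\<in>A. length F \<le> N" using finite_bounded_len[OF fA] by blast
  define Q where "Q = PL N"
  have fQ: "finite Q" using finite_PL Q_def by simp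
  define CU where "CU F = {vs. admissible_cut F vs}" for F
  have fCU: "finite (CU F)" for F using finite_cuts CU_def by simp
  define X where "X = (\<Union>F\<in>A. cpr F ` CU F)"
  have fX: "finite X" using fA fCU X_def by simp
  have cH: "(comult_H u :: _ \<Rightarrow> 'k) y = (\<Sum>F\<in>A. u F * Delta_H F y)" for y
    unfolding comult_H_def by (rule lext_eq[OF fA]) (simp add: A_def)
  have sX: "vsupp (comult_H u :: _ \<Rightarrow> 'k) \<subseteq> X"
  proof -
    have "vsupp (comult_H u :: _ \<Rightarrow> 'k) \<subseteq> (\<Union>F\<in>vsupp u. vsupp (Delta_H F :: _ \<Rightarrow> 'k))"
      unfolding comult_H_def by (rule vsupp_lext)
    also have "\<dots> \<subseteq> X"
    proof
      fix y assume "y \<in> (\<Union>F\<in>vsupp u. vsupp (Delta_H F :: _ \<Rightarrow> 'k))"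
      then obtain F where F: "F \<in> A" "(Delta_H F y :: 'k) \<noteq> 0" unfolding A_def vsupp_def by blast
      hence "{vs\<in>CU F. cpr F vs = y} \<noteq> {}" using Delta_H_eq[of F y] CU_def by (metis card.empty of_nat_0)
      thus "y \<in> X" unfolding X_def using F(1) by blast
    qed
    finally show ?thesis .
  qed
  define T where "T y = (tens Theta Theta y x :: 'k)" for y
  have inner: "(\<Sum>y\<in>X. Delta_H F y * T y) =
     (of_nat (card {vs. admissible_cut F vs \<and> c \<in> S_F (restrict_forest F (roo_set F vs)) \<and>
                   d \<in> S_F (restrict_forest F (lea_set F vs))}) :: 'k)" if F: "F \<in> A" for F
  proof -
    have sub: "cpr F ` CU F \<subseteq> X" using F X_def by blast
    have "(\<Sum>y\<in>X. Delta_H F y * T y) = (\<Sum>y\<in>X. of_nat (card {vs\<in>CU F. cpr F vs = y}) * T y)"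
      by (simp add: Delta_H_eq CU_def)
    also have "\<dots> = (\<Sum>vs\<in>CU F. T (cpr F vs))" by (rule fiber_sum[OF fCU fX sub])
    also have "\<dots> = (\<Sum>vs\<in>CU F. if c \<in> S_F (restrict_forest F (roo_set F vs)) \<and>
                   d \<in> S_F (restrict_forest F (lea_set F vs)) then 1 else 0)"
      by (rule sum.cong[OF refl]) (simp add: T_def cpr_def tens_def x Theta_def)
    also have "\<dots> = of_nat (card {vs\<in>CU F. c \<in> S_F (restrict_forest F (roo_set F vs)) \<and>
                   d \<in> S_F (restrict_forest F (lea_set F vs))})" by (rule sum_indicator[OF fCU])
    finally show ?thesis unfolding CU_def by simp
  qed
  have "lext (tens Theta Theta) (comult_H u :: _ \<Rightarrow> 'k) x = (\<Sum>y\<in>X. comult_H u y * T y)"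
    unfolding T_def by (rule lext_eq[OF fX sX])
  also have "\<dots> = (\<Sum>y\<in>X. \<Sum>F\<in>A. u F * (Delta_H F y * T y))"
    by (simp add: cH sum_distrib_right mult.assoc)
  also have "\<dots> = (\<Sum>F\<in>A. u F * (\<Sum>y\<in>X. Delta_H F y * T y))"
    by (subst sum.swap) (simp add: sum_distrib_left)
  also have "\<dots> = (\<Sum>F\<in>A. u F * of_nat (card (SIGMA s:S_F F. {k. k \<le> length s \<and> std (take k s) = c \<and> std (drop k s) = d})))"
  proof (rule sum.cong[OF refl])
    fix F assume F: "F \<in> A"
    hence "F \<in> HO" using AH by blast
    thus "u F * (\<Sum>y\<in>X. Delta_H F y * T y) = u F * of_nat (card (SIGMA s:S_F F. {k. k \<le> length s \<and> std (take k s) = c \<and> std (drop k s) = d}))"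
      using inner[OF F] coprod_card[of F c d] by simp
  qed
  finally have L: "lext (tens Theta Theta) (comult_H u :: _ \<Rightarrow> 'k) x =
     (\<Sum>F\<in>A. u F * of_nat (card (SIGMA s:S_F F. {k. k \<le> length s \<and> std (take k s) = c \<and> std (drop k s) = d})))" .
  have sQ: "vsupp (Theta_lin u :: nat list \<Rightarrow> 'k) \<subseteq> Q"
    using Theta_lin_vsupp[of u N] fA N A_def Q_def by auto
  have tu: "(Theta_lin u :: nat list \<Rightarrow> 'k) s = (\<Sum>F\<in>A. u F * Theta F s)" for s
    by (rule Theta_lin_eq[OF fA]) (simp add: A_def)
  define D where "D s = (Delta_FQ s x :: 'k)" for s
  have "comult_FQ (Theta_lin u) x = (\<Sum>s\<in>Q. (Theta_lin u :: nat list \<Rightarrow> 'k) s * D s)"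
    unfolding comult_FQ_def D_def by (rule lext_eq[OF fQ sQ])
  also have "\<dots> = (\<Sum>s\<in>Q. \<Sum>F\<in>A. u F * (Theta F s * D s))"
    by (simp add: tu sum_distrib_right mult.assoc)
  also have "\<dots> = (\<Sum>F\<in>A. u F * (\<Sum>s\<in>Q. Theta F s * D s))"
    by (subst sum.swap) (simp add: sum_distrib_left)
  also have "\<dots> = (\<Sum>F\<in>A. u F * (\<Sum>s\<in>S_F F. D s))"
  proof (rule sum.cong[OF refl])
    fix F assume "F \<in> A"
    hence "S_F F \<subseteq> Q" using S_F_sub2 N Q_def by auto
    thus "u F * (\<Sum>s\<in>Q. Theta F s * D s) = u F * (\<Sum>s\<in>S_F F. D s)" by (simp add: theta_sum[OF fQ])
  qed
  also have "\<dots> = (\<Sum>F\<in>A. u F * of_nat (card (SIGMA s:S_F F. {k. k \<le> length s \<and> std (take k s) = c \<and> std (drop k s) = d})))"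
  proof (rule sum.cong[OF refl])
    fix F assume "F \<in> A"
    have fS: "finite (S_F F)" using S_F_sub finite_PL finite_subset by blast
    have "(\<Sum>s\<in>S_F F. D s) = (\<Sum>s\<in>S_F F. of_nat (card {k. k \<le> length s \<and> std (take k s) = c \<and> std (drop k s) = d}))"
      by (rule sum.cong[OF refl]) (simp add: D_def Delta_FQ_def x)
    also have "\<dots> = of_nat (card (SIGMA s:S_F F. {k. k \<le> length s \<and> std (take k s) = c \<and> std (drop k s) = d}))"
      using fS by (simp add: card_SigmaI)
    finally show "u F * (\<Sum>s\<in>S_F F. D s) = u F * of_nat (card (SIGMA s:S_F F. {k. k \<le> length s \<and> std (take k s) = c \<and> std (drop k s) = d}))" by simp
  qed
  finally show "lext (tens Theta Theta) (comult_H u :: _ \<Rightarrow> 'k) x = comult_FQ (Theta_lin u) x" using L by simp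
qed




definition HOn :: "nat \<Rightarrow> nat list set" where "HOn n = {F\<in>HO. length F = n}"
definition Pn :: "nat \<Rightarrow> nat list set" where "Pn n = {s. perm_list s \<and> length s = n}"
definition ins :: "nat list \<Rightarrow> nat \<Rightarrow> nat list" where
  "ins s m = take m s @ [Suc (length s)] @ drop m s"

lemma finite_HOn: "finite (HOn n)"
proof -
  have "HOn n \<subseteq> {xs. set xs \<subseteq> {0..n} \<and> length xs = n}"
    unfolding HOn_def using HO_iff by (auto simp: in_set_conv_nth) (meson less_imp_le_nat order_trans)
  thus ?thesis using finite_lists_length_eq[of "{0..n}" n] finite_subset by blast
qed

lemma finite_Pn: "finite (Pn n)"
  using finite_PL[of n] finite_subset[of "Pn n" "PL n"] unfolding Pn_def PL_def by auto

lemma HOn_0: "HOn 0 = {[]}" unfolding HOn_def HO_iff by auto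
lemma Pn_0: "Pn 0 = {[]}" unfolding Pn_def perm_list_def by auto

lemma HOn_Suc: "HOn (Suc n) = (\<lambda>(G, p). G @ [p]) ` (HOn n \<times> {0..n})"
proof
  show "HOn (Suc n) \<subseteq> (\<lambda>(G, p). G @ [p]) ` (HOn n \<times> {0..n})"
  proof
    fix F assume F: "F \<in> HOn (Suc n)"
    hence l: "length F = Suc n" and h: "\<forall>i<length F. F!i \<le> i" unfolding HOn_def HO_iff by auto
    have ne: "F \<noteq> []" using l by auto
    have e: "F = butlast F @ [last F]" using ne by simp
    have "butlast F \<in> HOn n" unfolding HOn_def HO_iff using l h by (auto simp: nth_butlast)
    moreover have "last F \<le> n" using h l ne by (simp add: last_conv_nth)
    ultimately show "F \<in> (\<lambda>(G, p). G @ [p]) ` (HOn n \<times> {0..n})" using e by force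
  qed
next
  show "(\<lambda>(G, p). G @ [p]) ` (HOn n \<times> {0..n}) \<subseteq> HOn (Suc n)"
  proof
    fix F assume "F \<in> (\<lambda>(G, p). G @ [p]) ` (HOn n \<times> {0..n})"
    then obtain G p where G: "G \<in> HOn n" "p \<le> n" "F = G @ [p]" by auto
    have "\<forall>i<length G. G!i \<le> i" "length G = n" using G unfolding HOn_def HO_iff by auto
    hence "\<forall>i<length F. F!i \<le> i" using G by (auto simp: nth_append less_Suc_eq)
    thus "F \<in> HOn (Suc n)" using G unfolding HOn_def HO_iff by auto
  qed
qed

lemma sum_HOn_Suc: "(\<Sum>F\<in>HOn (Suc n). f F) = (\<Sum>G\<in>HOn n. \<Sum>p\<in>{0..n}. f (G @ [p]))"
proof -
  have inj: "inj_on (\<lambda>(G, p). G @ [p]) (HOn n \<times> {0..n})" by (auto simp: inj_on_def)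
  have "(\<Sum>F\<in>HOn (Suc n). f F) = (\<Sum>x\<in>HOn n \<times> {0..n}. f ((\<lambda>(G, p). G @ [p]) x))"
    unfolding HOn_Suc using sum.reindex[OF inj, of f] by (simp add: o_def)
  also have "\<dots> = (\<Sum>G\<in>HOn n. \<Sum>p\<in>{0..n}. f (G @ [p]))"
    by (simp add: sum.cartesian_product case_prod_beta)
  finally show ?thesis .
qed

lemma ins_Pn: assumes "s \<in> Pn n" "m \<le> n" shows "ins s m \<in> Pn (Suc n)"
proof -
  have s: "distinct s" "set s = {1..n}" "length s = n" using assms unfolding Pn_def perm_list_def by auto
  have "Suc n \<notin> set s" using s by auto
  have g1: "distinct (a @ [x] @ b)" if "distinct (a @ b)" "x \<notin> set (a @ b)" for a b and x :: nat
    using that by auto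
  have g2: "set (a @ [x] @ b) = insert x (set (a @ b))" for a b and x :: nat by auto
  have A: "distinct (take m s @ drop m s)" "Suc n \<notin> set (take m s @ drop m s)"
    using s \<open>Suc n \<notin> set s\<close> by (simp_all only: append_take_drop_id) simp_all
  have "distinct (ins s m)" unfolding ins_def using g1[OF A] s(3) by simp
  moreover have "set (ins s m) = insert (Suc n) {1..n}"
    unfolding ins_def using g2[of "take m s" "Suc n" "drop m s"] s by simp
  moreover have "insert (Suc n) {1..n} = {1..Suc n}" by auto
  moreover have "length (ins s m) = Suc n" using s assms unfolding ins_def by simp
  ultimately show ?thesis unfolding Pn_def perm_list_def by simp
qed

lemma Pn_Suc_decomp:
  assumes "t \<in> Pn (Suc n)"
  shows "\<exists>s m. s \<in> Pn n \<and> m \<le> n \<and> t = ins s m"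
proof -
  have t: "distinct t" "set t = {1..Suc n}" "length t = Suc n" using assms unfolding Pn_def perm_list_def by auto
  have "Suc n \<in> set t" using t by simp
  then obtain m where m: "m < length t" "t!m = Suc n" by (meson in_set_conv_nth)
  define a where "a = take m t"
  define b where "b = drop (Suc m) t"
  define s where "s = a @ b"
  have td: "t = a @ [Suc n] @ b" using id_take_nth_drop[OF m(1)] m(2) a_def b_def by simp
  have d3: "distinct (a @ [Suc n] @ b)" using t(1) by (simp only: td[symmetric])
  have s3: "set (a @ [Suc n] @ b) = {1..Suc n}" using t(2) by (simp only: td[symmetric])
  have ds: "distinct s" and ns: "Suc n \<notin> set s" using d3 s_def by auto
  have ls: "length s = n" using m t s_def a_def b_def by simp
  have "set s \<subseteq> {1..Suc n}" using s3 s_def by auto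
  hence "set s \<subseteq> {1..n}" using ns by (auto simp: le_Suc_eq)
  hence "s \<in> Pn n" using perm_list_iff2[OF ds] ls unfolding Pn_def by simp
  moreover have "m \<le> n" using m t by simp
  moreover have "ins s m = t"
  proof -
    have la: "length a = m" using a_def m by simp
    have "take m s = a" "drop m s = b" using la s_def by auto
    thus ?thesis unfolding ins_def using ls td by simp
  qed
  ultimately show ?thesis by blast
qed

lemma Theta_ins:
  assumes G: "G \<in> HOn n" and s: "s \<in> Pn n" and p: "p \<le> n" and m: "m \<le> n"
  shows "(Theta (G @ [p]) (ins s m) :: 'k::comm_ring_1) = Theta G s * (if p = 0 \<or> p \<in> set (take m s) then 1 else 0)"
proof -
  have GH: "G \<in> HO" "length G = n" using G unfolding HOn_def by auto
  have Gp: "G @ [p] \<in> HOn (Suc n)" unfolding HOn_Suc using G p by force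
  hence GpH: "G @ [p] \<in> HO" "length (G @ [p]) = Suc n" unfolding HOn_def by auto
  have sp: "perm_list s" "length s = n" "distinct s" "set s = {1..n}" using s unfolding Pn_def perm_list_def by auto
  define t where "t = ins s m"
  have tp: "perm_list t" "length t = Suc n" using ins_Pn[OF s m] t_def unfolding Pn_def by auto
  have dt: "distinct t" using tp perm_list_def by blast
  have ns: "Suc n \<notin> set s" using sp by auto
  have ft: "filter (\<lambda>x. x \<noteq> Suc n) t = s"
  proof -
    have "filter (\<lambda>x. x \<noteq> Suc n) (take m s) = take m s" "filter (\<lambda>x. x \<noteq> Suc n) (drop m s) = drop m s"
      using ns by (auto intro!: filter_True dest: in_set_takeD in_set_dropD)
    thus ?thesis unfolding t_def ins_def sp(2) by simp
  qed
  have bt: "before t x y \<longleftrightarrow> before s x y" if "x \<noteq> Suc n" "y \<noteq> Suc n" for x y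
    using before_filter_iff[of "\<lambda>x. x \<noteq> Suc n" t x y] ft that by simp
  have last_edge: "before t p (Suc n) \<longleftrightarrow> p \<in> set (take m s)" if "p \<noteq> 0" for p'
  proof
    assume "p \<in> set (take m s)"
    thus "before t p (Suc n)" unfolding t_def ins_def sp(2) by (intro before_appI3) auto
  next
    assume b: "before t p (Suc n)"
    show "p \<in> set (take m s)"
    proof (rule ccontr)
      assume "p \<notin> set (take m s)"
      moreover have "p \<in> set s" using that p sp by auto
      ultimately have "p \<in> set (drop m s)" by (metis Un_iff append_take_drop_id set_append)
      hence "before t (Suc n) p" unfolding t_def ins_def sp(2)
        by (metis append_assoc before_appI3 in_set_conv_decomp append_Cons append_Nil)
      thus False using b before_asym dt by blast
    qed
  qed
  have "t \<in> S_F (G @ [p]) \<longleftrightarrow> (\<forall>i. 1 \<le> i \<and> i \<le> Suc n \<and> (G @ [p])!(i-1) \<noteq> 0 \<longrightarrow> before t ((G @ [p])!(i-1)) i)"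
    using S_F_before[OF HO_bound[OF GpH(1)]] tp GpH by simp
  also have "\<dots> \<longleftrightarrow> (\<forall>i. 1 \<le> i \<and> i \<le> n \<and> G!(i-1) \<noteq> 0 \<longrightarrow> before s (G!(i-1)) i) \<and> (p \<noteq> 0 \<longrightarrow> before t p (Suc n))"
  proof -
    have "(1 \<le> i \<and> i \<le> Suc n \<and> (G @ [p])!(i-1) \<noteq> 0 \<longrightarrow> before t ((G @ [p])!(i-1)) i) \<longleftrightarrow>
          (1 \<le> i \<and> i \<le> n \<and> G!(i-1) \<noteq> 0 \<longrightarrow> before s (G!(i-1)) i) \<and> (i = Suc n \<longrightarrow> p \<noteq> 0 \<longrightarrow> before t p (Suc n))" for i
    proof (cases "1 \<le> i \<and> i \<le> n")
      case True
      hence "i - 1 < length G" using GH by arith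
      hence "(G @ [p])!(i-1) = G!(i-1)" by (simp add: nth_append)
      moreover have "G!(i-1) \<le> n" using HO_bound[OF GH(1)] \<open>i - 1 < length G\<close> GH by simp
      ultimately show ?thesis using True bt[of "G!(i-1)" i] by auto
    next
      case False
      show ?thesis
      proof (cases "i = Suc n")
        case True thus ?thesis using GH by (simp add: nth_append)
      next
        case False2: False
        thus ?thesis using False by auto
      qed
    qed
    thus ?thesis by blast
  qed
  also have "\<dots> \<longleftrightarrow> s \<in> S_F G \<and> (p = 0 \<or> p \<in> set (take m s))"
    using S_F_before[OF HO_bound[OF GH(1)]] sp GH last_edge by auto
  finally show ?thesis unfolding Theta_def t_def by auto
qed




definition Phi :: "nat \<Rightarrow> (nat list \<Rightarrow> 'k::comm_ring_1) \<Rightarrow> nat list \<Rightarrow> 'k" where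
  "Phi n u s = (\<Sum>G\<in>HOn n. u G * Theta G s)"

lemma Phi_ins:
  assumes s: "s \<in> Pn n" and m: "m \<le> n"
  shows "Phi (Suc n) u (ins s m) =
         (\<Sum>p\<in>{0..n}. (if p = 0 \<or> p \<in> set (take m s) then 1 else 0) * Phi n (\<lambda>G. u (G @ [p])) s)"
proof -
  have "Phi (Suc n) u (ins s m) = (\<Sum>G\<in>HOn n. \<Sum>p\<in>{0..n}. u (G @ [p]) * Theta (G @ [p]) (ins s m))"
    unfolding Phi_def by (rule sum_HOn_Suc)
  also have "\<dots> = (\<Sum>G\<in>HOn n. \<Sum>p\<in>{0..n}. (if p = 0 \<or> p \<in> set (take m s) then 1 else 0) * (u (G @ [p]) * Theta G s))"
    by (rule sum.cong[OF refl], rule sum.cong[OF refl]) (simp add: Theta_ins[OF _ s _ m] mult_ac)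
  also have "\<dots> = (\<Sum>p\<in>{0..n}. \<Sum>G\<in>HOn n. (if p = 0 \<or> p \<in> set (take m s) then 1 else 0) * (u (G @ [p]) * Theta G s))"
    by (rule sum.swap)
  also have "\<dots> = (\<Sum>p\<in>{0..n}. (if p = 0 \<or> p \<in> set (take m s) then 1 else 0) * Phi n (\<lambda>G. u (G @ [p])) s)"
    unfolding Phi_def by (simp add: sum_distrib_left)
  finally show ?thesis .
qed

lemma ind_sum:
  assumes s: "s \<in> Pn n" and m: "m \<le> n"
  shows "(\<Sum>p\<in>{0..n}. (if p = 0 \<or> p \<in> set (take m s) then 1 else 0) * (v p :: 'k::comm_ring_1)) =
         (\<Sum>p\<in>insert 0 (set (take m s)). v p)"
proof -
  have sub: "insert 0 (set (take m s)) \<subseteq> {0..n}" using s unfolding Pn_def perm_list_def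
    by (auto dest: in_set_takeD)
  have "(\<Sum>p\<in>{0..n}. (if p = 0 \<or> p \<in> set (take m s) then 1 else 0) * v p) =
        (\<Sum>p\<in>{0..n}. if p \<in> insert 0 (set (take m s)) then v p else 0)"
    by (rule sum.cong) auto
  also have "\<dots> = (\<Sum>p\<in>{p\<in>{0..n}. p \<in> insert 0 (set (take m s))}. v p)"
    by (rule sum.inter_filter[symmetric]) simp
  also have "{p\<in>{0..n}. p \<in> insert 0 (set (take m s))} = insert 0 (set (take m s))" using sub by blast
  finally show ?thesis .
qed

lemma take_Suc_set:
  assumes s: "s \<in> Pn n" and m: "m < n"
  shows "insert 0 (set (take (Suc m) s)) = insert (s!m) (insert 0 (set (take m s)))
         \<and> s!m \<notin> insert 0 (set (take m s)) \<and> pos s (s!m) = Suc m"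
proof -
  have sp: "distinct s" "set s = {1..n}" "length s = n" using s unfolding Pn_def perm_list_def by auto
  have "take (Suc m) s = take m s @ [s!m]" using m sp by (simp add: take_Suc_conv_app_nth)
  moreover have "s!m \<notin> set (take m s)"
  proof
    assume "s!m \<in> set (take m s)"
    then obtain j where j: "j < length (take m s)" "take m s ! j = s!m" by (meson in_set_conv_nth)
    hence "s!j = s!m" "j < m" by auto
    thus False using sp m nth_eq_iff_index_eq[of s j m] by simp
  qed
  moreover have "s!m \<noteq> 0" using sp m nth_mem[of m s] by force
  moreover have "pos s (s!m) = Suc m" using pos_nth sp m by simp
  ultimately show ?thesis by auto
qed

lemma Phi_inj: "\<forall>u. (\<forall>s\<in>Pn n. (Phi n u s :: 'k::comm_ring_1) = 0) \<longrightarrow> (\<forall>G\<in>HOn n. u G = 0)"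
proof (induction n)
  case 0
  show ?case
  proof (intro allI impI)
    fix u :: "nat list \<Rightarrow> 'k" assume "\<forall>s\<in>Pn 0. Phi 0 u s = 0"
    hence "Phi 0 u [] = 0" using Pn_0 by simp
    thus "\<forall>G\<in>HOn 0. u G = 0" unfolding Phi_def HOn_0 by (simp add: Theta_def S_F_Nil)
  qed
next
  case (Suc n)
  show ?case
  proof (intro allI impI)
    fix u :: "nat list \<Rightarrow> 'k" assume h: "\<forall>s\<in>Pn (Suc n). Phi (Suc n) u s = 0"
    define v where "v p s = Phi n (\<lambda>G. u (G @ [p])) s" for p s
    have W: "(\<Sum>p\<in>insert 0 (set (take m s)). v p s) = 0" if s: "s \<in> Pn n" and m: "m \<le> n" for s m
    proof -
      have "0 = Phi (Suc n) u (ins s m)" using h ins_Pn[OF s m] by simp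
      also have "\<dots> = (\<Sum>p\<in>{0..n}. (if p = 0 \<or> p \<in> set (take m s) then 1 else 0) * v p s)"
        using Phi_ins[OF s m, of u] v_def by simp
      also have "\<dots> = (\<Sum>p\<in>insert 0 (set (take m s)). v p s)" by (rule ind_sum[OF s m])
      finally show ?thesis by simp
    qed
    have V: "\<forall>p\<in>{0..n}. \<forall>s\<in>Pn n. v p s = 0"
    proof (intro ballI)
      fix p s assume p: "p \<in> {0..n}" and s: "s \<in> Pn n"
      have "m \<le> n \<longrightarrow> (\<forall>q\<in>insert 0 (set (take m s)). v q s = 0)" for m
      proof (induction m)
        case 0 show ?case using W[OF s, of 0] by simp
      next
        case (Suc m)
        show ?case
        proof
          assume m: "Suc m \<le> n"
          note T = take_Suc_set[OF s, of m]
          have IH: "\<forall>q\<in>insert 0 (set (take m s)). v q s = 0" using Suc m by simp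
          have "0 = (\<Sum>q\<in>insert 0 (set (take (Suc m) s)). v q s)" using W[OF s m] by simp
          also have "\<dots> = v (s!m) s + (\<Sum>q\<in>insert 0 (set (take m s)). v q s)"
            using T m by simp
          also have "(\<Sum>q\<in>insert 0 (set (take m s)). v q s) = 0" using IH by (intro sum.neutral) blast
          hence "v (s!m) s + (\<Sum>q\<in>insert 0 (set (take m s)). v q s) = v (s!m) s" by simp
          finally show "\<forall>q\<in>insert 0 (set (take (Suc m) s)). v q s = 0" using T m IH by auto
        qed
      qed
      hence "\<forall>q\<in>insert 0 (set (take n s)). v q s = 0" by (metis order_refl)
      moreover have "insert 0 (set (take n s)) = {0..n}" using s unfolding Pn_def perm_list_def by auto
      ultimately show "v p s = 0" using p by blast
    qed
    have "\<forall>G\<in>HOn n. u (G @ [p]) = 0" if p: "p \<in> {0..n}" for p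
      using Suc.IH[rule_format, of "\<lambda>G. u (G @ [p])"] V p v_def by auto
    thus "\<forall>G\<in>HOn (Suc n). u G = 0" unfolding HOn_Suc by auto
  qed
qed

lemma Phi_surj: "\<forall>w. \<exists>u. \<forall>s\<in>Pn n. (Phi n u s :: 'k::comm_ring_1) = w s"
proof (induction n)
  case 0
  show ?case
  proof
    fix w :: "nat list \<Rightarrow> 'k"
    show "\<exists>u. \<forall>s\<in>Pn 0. Phi 0 u s = w s"
      by (rule exI[of _ "\<lambda>G. w []"]) (simp add: Pn_0 Phi_def HOn_0 Theta_def S_F_Nil)
  qed
next
  case (Suc n)
  show ?case
  proof
    fix w :: "nat list \<Rightarrow> 'k"
    define t where "t s m = w (ins s m)" for s m
    define v where "v p s = (if p = 0 then t s 0 else t s (pos s p) - t s (pos s p - 1))" for p s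
    have tele: "m \<le> n \<longrightarrow> (\<Sum>p\<in>insert 0 (set (take m s)). v p s) = t s m" if s: "s \<in> Pn n" for s m
    proof (induction m)
      case 0 show ?case by (simp add: v_def)
    next
      case (Suc m)
      show ?case
      proof
        assume m: "Suc m \<le> n"
        note T = take_Suc_set[OF s, of m]
        have "(\<Sum>p\<in>insert 0 (set (take (Suc m) s)). v p s) = v (s!m) s + (\<Sum>p\<in>insert 0 (set (take m s)). v p s)"
          using T m by simp
        also have "\<dots> = v (s!m) s + t s m" using Suc m by simp
        also have "\<dots> = t s (Suc m)" using T m unfolding v_def by auto
        finally show "(\<Sum>p\<in>insert 0 (set (take (Suc m) s)). v p s) = t s (Suc m)" .
      qed
    qed
    have "\<forall>p. \<exists>up. \<forall>s\<in>Pn n. (Phi n up s :: 'k) = v p s" using Suc.IH by blast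
    then obtain U where U: "\<forall>p. \<forall>s\<in>Pn n. (Phi n (U p) s :: 'k) = v p s" by metis
    define u where "u G = U (last G) (butlast G)" for G
    have "\<forall>s\<in>Pn (Suc n). Phi (Suc n) u s = w s"
    proof
      fix r assume "r \<in> Pn (Suc n)"
      then obtain s m where sm: "s \<in> Pn n" "m \<le> n" "r = ins s m" using Pn_Suc_decomp by blast
      have "Phi (Suc n) u r = (\<Sum>p\<in>{0..n}. (if p = 0 \<or> p \<in> set (take m s) then 1 else 0) * Phi n (\<lambda>G. u (G @ [p])) s)"
        using Phi_ins[OF sm(1,2)] sm(3) by simp
      also have "\<dots> = (\<Sum>p\<in>{0..n}. (if p = 0 \<or> p \<in> set (take m s) then 1 else 0) * v p s)"
        using U sm(1) by (simp add: u_def)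
      also have "\<dots> = (\<Sum>p\<in>insert 0 (set (take m s)). v p s)" by (rule ind_sum[OF sm(1,2)])
      also have "\<dots> = t s m" using tele[OF sm(1)] sm(2) by simp
      finally show "Phi (Suc n) u r = w r" using sm t_def by simp
    qed
    thus "\<exists>u. \<forall>s\<in>Pn (Suc n). Phi (Suc n) u s = w s" by blast
  qed
qed

lemma Theta_lin_Phi:
  assumes u: "u \<in> fvecs HO" and s: "s \<in> Pn n"
  shows "(Theta_lin u :: nat list \<Rightarrow> 'k::comm_ring_1) s = Phi n u s"
proof -
  define A where "A = vsupp u \<union> HOn n"
  have fA: "finite A" using fvecs_finite[OF u] finite_HOn A_def by simp
  have "Theta_lin u s = (\<Sum>F\<in>A. u F * Theta F s)" by (rule Theta_lin_eq[OF fA]) (simp add: A_def)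
  also have "\<dots> = (\<Sum>F\<in>HOn n. u F * Theta F s)"
  proof (rule sum.mono_neutral_right[OF fA])
    show "HOn n \<subseteq> A" using A_def by blast
    show "\<forall>F\<in>A - HOn n. u F * Theta F s = 0"
    proof
      fix F assume "F \<in> A - HOn n"
      hence "F \<in> HO" "length F \<noteq> n" using fvecs_sub[OF u] A_def HOn_def by auto
      hence "s \<notin> S_F F" using s unfolding Pn_def S_F_def by auto
      thus "u F * Theta F s = 0" by (simp add: Theta_def)
    qed
  qed
  finally show ?thesis unfolding Phi_def .
qed

lemma Phi_diff: "Phi n (\<lambda>F. u F - u' F) s = Phi n u s - Phi n u' s"
  unfolding Phi_def by (simp add: left_diff_distrib sum_subtractf)

lemma bij_part: "bij_betw (Theta_lin :: (nat list \<Rightarrow> 'k::comm_ring_1) \<Rightarrow> _) (fvecs HO) (fvecs FQ)"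
  unfolding bij_betw_def
proof (intro conjI)
  show "inj_on (Theta_lin :: (nat list \<Rightarrow> 'k) \<Rightarrow> _) (fvecs HO)"
  proof (rule inj_onI)
    fix u u' :: "nat list \<Rightarrow> 'k"
    assume u: "u \<in> fvecs HO" and u': "u' \<in> fvecs HO" and eq: "Theta_lin u = Theta_lin u'"
    show "u = u'"
    proof
      fix G
      show "u G = u' G"
      proof (cases "G \<in> HO")
        case False
        hence "u G = 0" "u' G = 0" using fvecs_sub[OF u] fvecs_sub[OF u'] unfolding vsupp_def by blast+
        thus ?thesis by simp
      next
        case True
        define n where "n = length G"
        have "\<forall>s\<in>Pn n. Phi n (\<lambda>F. u F - u' F) s = 0"
          using Theta_lin_Phi[OF u] Theta_lin_Phi[OF u'] eq Phi_diff by (metis diff_self)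
        hence "\<forall>F\<in>HOn n. u F - u' F = 0" using Phi_inj[of n] by blast
        thus ?thesis using True n_def HOn_def by simp
      qed
    qed
  qed
next
  show "(Theta_lin :: (nat list \<Rightarrow> 'k) \<Rightarrow> _) ` fvecs HO = fvecs FQ"
  proof
    show "(Theta_lin :: (nat list \<Rightarrow> 'k) \<Rightarrow> _) ` fvecs HO \<subseteq> fvecs FQ"
    proof
      fix x assume "x \<in> (Theta_lin :: (nat list \<Rightarrow> 'k) \<Rightarrow> _) ` fvecs HO"
      then obtain u where u: "u \<in> fvecs HO" "x = Theta_lin u" by blast
      obtain N where N: "\<forall>F\<in>vsupp u. length F \<le> N" using finite_bounded_len fvecs_finite[OF u(1)] by blast
      have "vsupp x \<subseteq> PL N" using Theta_lin_vsupp[OF fvecs_finite[OF u(1)] N] u by simp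
      moreover have "PL N \<subseteq> FQ" unfolding PL_def FQ_def by auto
      ultimately show "x \<in> fvecs FQ" unfolding fvecs_def using finite_PL finite_subset by blast
    qed
  next
    show "fvecs FQ \<subseteq> (Theta_lin :: (nat list \<Rightarrow> 'k) \<Rightarrow> _) ` fvecs HO"
    proof
      fix w :: "nat list \<Rightarrow> 'k" assume w: "w \<in> fvecs FQ"
      obtain N where N: "\<forall>s\<in>vsupp w. length s \<le> N" using finite_bounded_len fvecs_finite[OF w] by blast
      have "\<forall>n. \<exists>un. \<forall>s\<in>Pn n. (Phi n un s :: 'k) = w s" using Phi_surj by blast
      then obtain U where U: "\<forall>n. \<forall>s\<in>Pn n. (Phi n (U n) s :: 'k) = w s" by metis
      define u where "u F = (if F \<in> HO \<and> length F \<le> N then U (length F) F else 0)" for F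
      define A where "A = (\<Union>n\<in>{0..N}. HOn n)"
      have fA: "finite A" using finite_HOn A_def by simp
      have sA: "vsupp u \<subseteq> A" unfolding vsupp_def u_def A_def HOn_def by auto
      have "vsupp u \<subseteq> HO" unfolding vsupp_def u_def by (auto split: if_splits)
      moreover have "finite (vsupp u)" using sA fA finite_subset by blast
      ultimately have uH: "u \<in> fvecs HO" unfolding fvecs_def by blast
      have "Theta_lin u = w"
      proof
        fix s
        show "Theta_lin u s = w s"
        proof (cases "perm_list s")
          case False
          have "Theta_lin u s = (\<Sum>F\<in>A. u F * Theta F s)" by (rule Theta_lin_eq[OF fA sA])
          also have "\<dots> = 0" using False by (simp add: Theta_def S_F_def)
          finally show ?thesis using False fvecs_sub[OF w] unfolding vsupp_def FQ_def by auto
        next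
          case True
          define n where "n = length s"
          have sP: "s \<in> Pn n" using True n_def Pn_def by simp
          have L: "Theta_lin u s = Phi n u s" by (rule Theta_lin_Phi[OF uH sP])
          show ?thesis
          proof (cases "n \<le> N")
            case True
            have "Phi n u s = Phi n (U n) s" unfolding Phi_def
              by (rule sum.cong[OF refl]) (use True in \<open>simp add: u_def HOn_def\<close>)
            thus ?thesis using L U sP by simp
          next
            case False
            have "Phi n u s = 0" unfolding Phi_def
              by (rule sum.neutral) (use False in \<open>auto simp: u_def HOn_def\<close>)
            moreover have "w s = 0" using N False n_def unfolding vsupp_def by force
            ultimately show ?thesis using L by simp
          qed
        qed
      qed
      thus "w \<in> (Theta_lin :: (nat list \<Rightarrow> 'k) \<Rightarrow> _) ` fvecs HO" using uH by blast
    qed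
  qed
qed



theorem mainTheorem7:
  shows "bij_betw (Theta_lin :: (nat list \<Rightarrow> 'k::real_normed_field) \<Rightarrow> _) (fvecs HO) (fvecs FQ)
    \<and> (\<forall>F\<in>HO. \<forall>s. (Theta F s :: 'k) \<noteq> 0 \<longrightarrow> length s = length F)
    \<and> Theta_lin (delta [] :: nat list \<Rightarrow> 'k) = delta []
    \<and> (\<forall>u\<in>fvecs HO. \<forall>v\<in>fvecs HO.
          Theta_lin (mult_H u v :: nat list \<Rightarrow> 'k) = mult_FQ (Theta_lin u) (Theta_lin v))
    \<and> (\<forall>u\<in>fvecs HO.
          lext (tens Theta Theta) (comult_H u :: nat list \<times> nat list \<Rightarrow> 'k) = comult_FQ (Theta_lin u))
    \<and> (\<forall>u\<in>fvecs HO. counit (Theta_lin u :: nat list \<Rightarrow> 'k) = counit u)"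
proof (intro conjI ballI allI impI)
  show "bij_betw (Theta_lin :: (nat list \<Rightarrow> 'k) \<Rightarrow> _) (fvecs HO) (fvecs FQ)" by (rule bij_part)
next
  fix F s assume "(Theta F s :: 'k) \<noteq> 0"
  thus "length s = length F" by (rule length_part)
next
  show "Theta_lin (delta [] :: nat list \<Rightarrow> 'k) = delta []" by (rule unit_part)
next
  fix u v :: "nat list \<Rightarrow> 'k" assume "u \<in> fvecs HO" "v \<in> fvecs HO"
  thus "Theta_lin (mult_H u v) = mult_FQ (Theta_lin u) (Theta_lin v)" by (rule product_part)
next
  fix u :: "nat list \<Rightarrow> 'k" assume "u \<in> fvecs HO"
  thus "lext (tens Theta Theta) (comult_H u :: nat list \<times> nat list \<Rightarrow> 'k) = comult_FQ (Theta_lin u)"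
    by (rule coproduct_part)
next
  fix u :: "nat list \<Rightarrow> 'k" assume "u \<in> fvecs HO"
  thus "counit (Theta_lin u :: nat list \<Rightarrow> 'k) = counit u" by (rule counit_part)
qed

end
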